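(* Let $I,J\subset[n]$ be nonempty with $I\cup J=[n]$, $I\cap J=\emptyset$. Let $\mathcal V\subset(\mathbb{R}\cup\{-\infty\})^n$ be a finite set of vectors, none identically $-\infty$, such that for each $l\in[n]$ there is $v\in\mathcal V$ with $v_l\neq-\infty$. Define $T^{IJ}$ on $(\mathbb{R}\cup\{-\infty\})^n$ by $$T^{IJ}_l(x)=\begin{cases}\inf_{v\in\mathcal V,\,v_l\neq-\infty}\{-v_l+\max_{j\in J}(v_j+x_j)\}, & l\in I,\\ \inf_{v\in\mathcal V,\,v_l\neq-\infty}\{-v_l+\max_{i\in I}(v_i+x_i)\}, & l\in J.\end{cases}$$ Then $$\min_{a}\operatorname{dist}_H(\mathcal V,\mathcal H^{IJ}_a)=-\rho(T^{IJ})=\sup\{r\ge0:\exists w\in\mathbb{R}^n,\ B_{IJ}(w,r)\subset\operatorname{Span}(\mathcal V)\},$$ where the minimum is over $a\in(\mathbb{R}\cup\{-\infty\})^n$ not identically $-\infty$. The minimum is achieved by any such $b$ with $T^{IJ}(b)\ge\rho(T^{IJ})+b$. Moreover, if $\rho(T^{IJ})$ is finite, the supremum is achieved: there exists $c\in\mathbb{R}^n$ with $B_{IJ}(c,-\rho(T^{IJ}))\subset\operatorname{Span}(\mathcal V)$.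
   Context: $-\infty+c=-\infty$, $\max\emptyset=-\infty$. $\mathcal H^{IJ}_a=\{y:\max_{i\in I}(a_i+y_i)=\max_{j\in J}(a_j+y_j)\}$. Hilbert's projective metric $d(x,y)=\inf\{\lambda-\mu:\lambda,\mu\in\mathbb{R},\ \mu+y_l\le x_l\le\lambda+y_l\ \forall l\}$; $\operatorname{dist}_H(A,B)=\sup_{x\in A}\inf_{y\in B}d(x,y)$. $\operatorname{Span}(\mathcal V)$ is the tropical cone generated by $\mathcal V$ (entrywise maxima of vectors $\alpha+v$, $v\in\mathcal V$, $\alpha\in\mathbb{R}\cup\{-\infty\}$). $e^J\in\mathbb{R}^n$ has $e^J_l=0$ for $l\in I$ and $e^J_l=1$ for $l\in J$; the vertical interval is $B_{IJ}(w,r)=\{\lambda+w+\mu e^J:\mu\in[-r,r],\lambda\in\mathbb{R}\}$ for $w\in\mathbb{R}^n$, $r\in[0,+\infty]$. $\rho(T)=\sup\{\lambda\in\mathbb{R}\cup\{-\infty\}:\exists u\not\equiv-\infty,\ T(u)=\lambda+u\}$. *)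

theory Defs
  imports Complex_Main "HOL-Library.Extended_Real"
begin

text \<open>Vectors in (R \<union> {-\<infinity>})^n are modelled as functions 'n \<Rightarrow> ereal
  (index type 'n finite, playing the role of [n]) that never take the value +\<infinity>.\<close>

definition tvecs :: "('n \<Rightarrow> ereal) set" where
  "tvecs = {x. \<forall>l. x l \<noteq> \<infinity>}"

text \<open>Hilbert's projective metric (inf over reals; Inf of the empty set is +\<infinity>).\<close>
definition hilbert_d :: "('n \<Rightarrow> ereal) \<Rightarrow> ('n \<Rightarrow> ereal) \<Rightarrow> ereal" where
  "hilbert_d x y = Inf {ereal (lam - mu) | lam mu.
      \<forall>l. ereal mu + y l \<le> x l \<and> x l \<le> ereal lam + y l}"

definition dist_H :: "('n \<Rightarrow> ereal) set \<Rightarrow> ('n \<Rightarrow> ereal) set \<Rightarrow> ereal" where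
  "dist_H A B = (SUP x\<in>A. INF y\<in>B. hilbert_d x y)"

definition trop_hyp :: "'n set \<Rightarrow> 'n set \<Rightarrow> ('n \<Rightarrow> ereal) \<Rightarrow> ('n \<Rightarrow> ereal) set" where
  "trop_hyp I J a = {y \<in> tvecs. (SUP i\<in>I. a i + y i) = (SUP j\<in>J. a j + y j)}"

definition vert_int :: "'n set \<Rightarrow> ('n \<Rightarrow> real) \<Rightarrow> ereal \<Rightarrow> ('n \<Rightarrow> ereal) set" where
  "vert_int J w r = {(\<lambda>l. ereal (lam + w l + mu * (if l \<in> J then 1 else 0))) | lam mu.
      - r \<le> ereal mu \<and> ereal mu \<le> r}"

definition trop_span :: "('n \<Rightarrow> ereal) set \<Rightarrow> ('n \<Rightarrow> ereal) set" where
  "trop_span V = {x. \<exists>\<alpha>. (\<forall>v\<in>V. \<alpha> v \<noteq> \<infinity>) \<and> x = (\<lambda>l. SUP v\<in>V. \<alpha> v + v l)}"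

definition T_IJ :: "('n \<Rightarrow> ereal) set \<Rightarrow> 'n set \<Rightarrow> 'n set \<Rightarrow> ('n \<Rightarrow> ereal) \<Rightarrow> ('n \<Rightarrow> ereal)" where
  "T_IJ V I J x = (\<lambda>l.
     if l \<in> I then (INF v\<in>{v\<in>V. v l \<noteq> -\<infinity>}. - v l + (SUP j\<in>J. v j + x j))
     else (INF v\<in>{v\<in>V. v l \<noteq> -\<infinity>}. - v l + (SUP i\<in>I. v i + x i)))"

definition spec_rad :: "(('n \<Rightarrow> ereal) \<Rightarrow> ('n \<Rightarrow> ereal)) \<Rightarrow> ereal" where
  "spec_rad T = Sup {lam. lam \<noteq> \<infinity> \<and>
     (\<exists>u\<in>tvecs. (\<exists>l. u l \<noteq> -\<infinity>) \<and> T u = (\<lambda>l. lam + u l))}"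

end

theory Submission
  imports Defs "HOL-Analysis.Analysis"
begin

lemma ereal_cancel_left: "ereal (-c) + (ereal c + y) = y"
  by (cases y) auto

lemma INF_ereal_add_real: "(INF x\<in>A. ereal c + f x) = ereal c + (INF x\<in>A. f x)"
proof (rule antisym)
  show "ereal c + (INF x\<in>A. f x) \<le> (INF x\<in>A. ereal c + f x)"
    by (rule INF_greatest) (simp add: INF_lower add_left_mono)
  have "ereal (-c) + (INF x\<in>A. ereal c + f x) \<le> (INF x\<in>A. f x)"
  proof (rule INF_greatest)
    fix x assume "x \<in> A"
    then have "ereal (-c) + (INF x\<in>A. ereal c + f x) \<le> ereal (-c) + (ereal c + f x)"
      by (intro add_left_mono INF_lower)
    then show "ereal (-c) + (INF x\<in>A. ereal c + f x) \<le> f x" by (simp add: ereal_cancel_left)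
  qed
  then have "ereal c + (ereal (-c) + (INF x\<in>A. ereal c + f x)) \<le> ereal c + (INF x\<in>A. f x)"
    by (simp add: add_left_mono)
  then show "(INF x\<in>A. ereal c + f x) \<le> ereal c + (INF x\<in>A. f x)"
    using ereal_cancel_left[of "-c"] by simp
qed

lemma SUP_ereal_add_real: "A \<noteq> {} \<Longrightarrow> (SUP x\<in>A. ereal c + f x) = ereal c + (SUP x\<in>A. f x)"
  by (rule SUP_ereal_add_right) auto

lemma finite_INF_attained:
  fixes f :: "'a \<Rightarrow> 'b::complete_linorder"
  assumes "finite A" "A \<noteq> {}" shows "\<exists>a\<in>A. (INF x\<in>A. f x) = f a"
proof -
  have "Inf (f ` A) = Min (f ` A)" using assms by (simp add: Min_Inf)
  moreover have "Min (f ` A) \<in> f ` A" using assms by simp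
  ultimately show ?thesis by auto
qed

lemma finite_SUP_attained:
  fixes f :: "'a \<Rightarrow> 'b::complete_linorder"
  assumes "finite A" "A \<noteq> {}" shows "\<exists>a\<in>A. (SUP x\<in>A. f x) = f a"
proof -
  have "Sup (f ` A) = Max (f ` A)" using assms by (simp add: Max_Sup)
  moreover have "Max (f ` A) \<in> f ` A" using assms by simp
  ultimately show ?thesis by auto
qed

locale tsetup =
  fixes I J :: "'n::finite set" and V :: "('n \<Rightarrow> ereal) set"
  assumes Ine: "I \<noteq> {}" and Jne: "J \<noteq> {}" and IJU: "I \<union> J = UNIV" and IJD: "I \<inter> J = {}"
    and finV: "finite V" and Vt: "V \<subseteq> tvecs"
    and Vnz: "\<forall>v\<in>V. \<exists>l. v l \<noteq> -\<infinity>"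
    and cover: "\<forall>l. \<exists>v\<in>V. v l \<noteq> -\<infinity>"
begin

abbreviation T where "T \<equiv> T_IJ V I J"

definition opp :: "'n \<Rightarrow> 'n set" where "opp l = (if l \<in> I then J else I)"

definition Vl :: "'n \<Rightarrow> ('n \<Rightarrow> ereal) set" where "Vl l = {v\<in>V. v l \<noteq> -\<infinity>}"

lemma opp_ne: "opp l \<noteq> {}" using Ine Jne by (simp add: opp_def)
lemma opp_fin: "finite (opp l)" by simp
lemma Vl_ne: "Vl l \<noteq> {}" using cover by (auto simp: Vl_def)
lemma Vl_fin: "finite (Vl l)" using finV by (simp add: Vl_def)
lemma Vl_sub: "Vl l \<subseteq> V" by (auto simp: Vl_def)
lemma notinf: "v \<in> V \<Longrightarrow> v k \<noteq> \<infinity>" using Vt by (auto simp: tvecs_def)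
lemma in_opp: "k \<in> opp l \<longleftrightarrow> (l \<in> I \<longleftrightarrow> k \<in> J)"
  using IJU IJD by (auto simp: opp_def)

lemma T_eq: "T x l = (INF v\<in>Vl l. - v l + (SUP k\<in>opp l. v k + x k))"
  by (simp add: T_IJ_def opp_def Vl_def)

lemma T_mono: assumes "\<And>k. x k \<le> y k" shows "T x l \<le> T y l"
  unfolding T_eq
proof (rule INF_mono)
  fix v assume "v \<in> Vl l"
  have "(SUP k\<in>opp l. v k + x k) \<le> (SUP k\<in>opp l. v k + y k)"
    by (rule SUP_mono) (use assms add_left_mono in blast)
  then show "\<exists>m\<in>Vl l. - m l + (SUP k\<in>opp l. m k + x k) \<le> - v l + (SUP k\<in>opp l. v k + y k)"
    using \<open>v \<in> Vl l\<close> add_left_mono by blast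
qed


lemma T_homog: "T (\<lambda>k. ereal c + x k) l = ereal c + T x l"
proof -
  have "\<And>v. - v l + (SUP k\<in>opp l. v k + (ereal c + x k)) = ereal c + (- v l + (SUP k\<in>opp l. v k + x k))"
  proof -
    fix v :: "'n \<Rightarrow> ereal"
    have "(SUP k\<in>opp l. v k + (ereal c + x k)) = (SUP k\<in>opp l. ereal c + (v k + x k))"
      by (simp add: add.left_commute)
    also have "\<dots> = ereal c + (SUP k\<in>opp l. v k + x k)"
      using opp_ne by (rule SUP_ereal_add_real)
    finally show "- v l + (SUP k\<in>opp l. v k + (ereal c + x k)) = ereal c + (- v l + (SUP k\<in>opp l. v k + x k))"
      by (simp add: add.left_commute)
  qed
  then show ?thesis unfolding T_eq by (simp add: INF_ereal_add_real)
qed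

lemma T_lt_inf: assumes "x \<in> tvecs" shows "T x l < \<infinity>"
proof -
  obtain v where v: "v \<in> Vl l" using Vl_ne by blast
  then have vV: "v \<in> V" and vl: "v l \<noteq> -\<infinity>" by (auto simp: Vl_def)
  obtain k where k: "k \<in> opp l" "(SUP k\<in>opp l. v k + x k) = v k + x k"
    using finite_SUP_attained[OF opp_fin opp_ne] by blast
  have "v k + x k < \<infinity>" using notinf[OF vV] assms by (auto simp: tvecs_def)
  moreover have "- v l < \<infinity>" using vl by (cases "v l") auto
  ultimately have "- v l + (SUP k\<in>opp l. v k + x k) < \<infinity>" using k by simp
  moreover have "T x l \<le> - v l + (SUP k\<in>opp l. v k + x k)" unfolding T_eq using v by (rule INF_lower)
  ultimately show ?thesis by (meson le_less_trans)
qed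

definition Sub :: "real \<Rightarrow> bool" where
  "Sub lam \<longleftrightarrow> (\<exists>a\<in>tvecs. (\<exists>l. a l \<noteq> -\<infinity>) \<and> (\<forall>l. ereal lam + a l \<le> T a l))"

definition Sp :: "real \<Rightarrow> bool" where
  "Sp lam \<longleftrightarrow> (\<exists>z::'n\<Rightarrow>real. \<forall>l. T (\<lambda>k. ereal (z k)) l \<le> ereal lam + ereal (z l))"

lemma Sp_mono: assumes "Sp lam" "lam \<le> lam'" shows "Sp lam'"
proof -
  obtain z where z: "\<And>l. T (\<lambda>k. ereal (z k)) l \<le> ereal lam + ereal (z l)" using assms(1) unfolding Sp_def by blast
  have "T (\<lambda>k. ereal (z k)) l \<le> ereal lam' + ereal (z l)" for l
    using z[of l] assms(2) by (simp add: order_trans)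
  then show ?thesis unfolding Sp_def by blast
qed

lemma Sub_mono: assumes "Sub lam" "lam' \<le> lam" shows "Sub lam'"
proof -
  obtain a where a: "a \<in> tvecs" "\<exists>l. a l \<noteq> -\<infinity>" "\<And>l. ereal lam + a l \<le> T a l"
    using assms(1) unfolding Sub_def by blast
  have "ereal lam' + a l \<le> T a l" for l
    using a(3)[of l] add_right_mono[of "ereal lam'" "ereal lam" "a l"] assms(2) by (simp add: order_trans)
  then show ?thesis using a unfolding Sub_def by blast
qed

lemma shift_above:
  fixes a :: "'n \<Rightarrow> ereal" and z :: "'n \<Rightarrow> real"
  assumes "a \<in> tvecs"
  obtains K where "\<And>l. a l \<le> ereal (z l + K)"
proof -
  define K where "K = Max ((\<lambda>l. if a l = -\<infinity> then 0 else real_of_ereal (a l) - z l) ` UNIV)"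
  have "a l \<le> ereal (z l + K)" for l
  proof (cases "a l = -\<infinity>")
    case False
    have "a l \<noteq> \<infinity>" using assms by (auto simp: tvecs_def)
    with False have al: "a l = ereal (real_of_ereal (a l))" by (cases "a l") auto
    have "(if a l = -\<infinity> then 0 else real_of_ereal (a l) - z l) \<le> K" unfolding K_def
      by (intro Max_ge finite_imageI finite rangeI)
    then have "real_of_ereal (a l) - z l \<le> K" using False by simp
    then show ?thesis by (subst al) simp
  qed simp
  then show ?thesis using that by blast
qed

lemma sub_le_super:
  assumes "Sub lam" "Sp lam'" shows "lam \<le> lam'"
proof -
  obtain a where a: "a \<in> tvecs" "\<exists>l. a l \<noteq> -\<infinity>" "\<And>l. ereal lam + a l \<le> T a l"
    using assms(1) unfolding Sub_def by blast
  obtain z where z: "\<And>l. T (\<lambda>k. ereal (z k)) l \<le> ereal lam' + ereal (z l)"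
    using assms(2) unfolding Sp_def by blast
  define S where "S = {l. a l \<noteq> -\<infinity>}"
  have Sne: "S \<noteq> {}" using a(2) by (auto simp: S_def)
  have afin: "l \<in> S \<Longrightarrow> a l = ereal (real_of_ereal (a l))" for l
    using a(1) by (cases "a l") (auto simp: S_def tvecs_def)
  obtain l0 where l0: "l0 \<in> S" "(INF l\<in>S. ereal (z l - real_of_ereal (a l))) = ereal (z l0 - real_of_ereal (a l0))"
    using finite_INF_attained[OF finite[of S] Sne] by blast
  define c where "c = z l0 - real_of_ereal (a l0)"
  have below: "ereal c + a l \<le> ereal (z l)" for l
  proof (cases "l \<in> S")
    case True
    have "ereal c \<le> ereal (z l - real_of_ereal (a l))"
      using l0 INF_lower[OF True, of "\<lambda>l. ereal (z l - real_of_ereal (a l))"] by (simp add: c_def)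
    then show ?thesis by (subst afin[OF True]) simp
  next
    case False then show ?thesis by (simp add: S_def)
  qed
  have "ereal c + (ereal lam + a l0) \<le> ereal c + T a l0" using a(3) by (rule add_left_mono)
  also have "\<dots> = T (\<lambda>k. ereal c + a k) l0" by (simp add: T_homog)
  also have "\<dots> \<le> T (\<lambda>k. ereal (z k)) l0" by (rule T_mono) (rule below)
  also have "\<dots> \<le> ereal lam' + ereal (z l0)" by (rule z)
  finally have "ereal c + (ereal lam + a l0) \<le> ereal lam' + ereal (z l0)" .
  moreover obtain A where A: "a l0 = ereal A" using afin[OF l0(1)] by blast
  ultimately have "ereal (c + (lam + A)) \<le> ereal (lam' + z l0)" by simp
  then have "c + (lam + A) \<le> lam' + z l0" by (simp only: ereal_less_eq)
  moreover have "c = z l0 - A" using A by (simp add: c_def)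
  ultimately show ?thesis by simp
qed

lemma eigen_exists:
  assumes a: "a \<in> tvecs" "\<exists>l. a l \<noteq> -\<infinity>" "\<And>l. ereal lam + a l \<le> T a l"
    and z: "\<And>l. T (\<lambda>k. ereal (z k)) l \<le> ereal lam + ereal (z l)"
  shows "\<exists>u\<in>tvecs. (\<exists>l. u l \<noteq> -\<infinity>) \<and> (\<forall>l. T u l = ereal lam + u l)"
proof -
  obtain K where K: "\<And>l. a l \<le> ereal (z l + K)" using shift_above[OF a(1)] by blast
  define z' where "z' = (\<lambda>l. ereal (z l + K))"
  have z': "T z' l \<le> ereal lam + z' l" for l
  proof -
    have "T z' l = ereal K + T (\<lambda>k. ereal (z k)) l"
      unfolding z'_def by (subst T_homog[symmetric]) (simp add: add.commute)
    also have "\<dots> \<le> ereal K + (ereal lam + ereal (z l))" using z by (rule add_left_mono)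
    finally show ?thesis by (simp add: z'_def ac_simps)
  qed
  define \<Phi> where "\<Phi> = (\<lambda>u::'n\<Rightarrow>ereal. \<lambda>l. max (a l) (min (z' l) (ereal (-lam) + T u l)))"
  have "mono \<Phi>"
  proof (rule monoI)
    fix u v :: "'n \<Rightarrow> ereal" assume "u \<le> v"
    then have "T u l \<le> T v l" for l by (intro T_mono) (simp add: le_fun_def)
    then show "\<Phi> u \<le> \<Phi> v" unfolding \<Phi>_def le_fun_def
      by (intro allI max.mono min.mono order_refl add_left_mono) auto
  qed
  define u where "u = lfp \<Phi>"
  have u: "u = \<Phi> u" unfolding u_def by (rule lfp_unfold[OF \<open>mono \<Phi>\<close>])
  have au: "a l \<le> u l" for l by (subst u) (simp add: \<Phi>_def)
  have uz: "u l \<le> z' l" for l by (subst u) (use K in \<open>auto simp: \<Phi>_def z'_def\<close>)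
  have lo: "a l \<le> ereal (-lam) + T u l" for l
  proof -
    have "ereal lam + a l \<le> T u l" using a(3) T_mono[of a u, OF au] order_trans by blast
    then have "ereal (-lam) + (ereal lam + a l) \<le> ereal (-lam) + T u l" by (rule add_left_mono)
    then show ?thesis by (simp add: ereal_cancel_left)
  qed
  have hi: "ereal (-lam) + T u l \<le> z' l" for l
  proof -
    have "T u l \<le> ereal lam + z' l" using z' T_mono[of u z', OF uz] order_trans by blast
    then have "ereal (-lam) + T u l \<le> ereal (-lam) + (ereal lam + z' l)" by (rule add_left_mono)
    then show ?thesis by (simp add: ereal_cancel_left)
  qed
  have ueq: "u l = ereal (-lam) + T u l" for l
    using lo[of l] hi[of l] by (subst u) (simp add: \<Phi>_def max_def min_def)
  have "T u l = ereal lam + u l" for l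
    using ereal_cancel_left[of "-lam" "T u l"] ueq[of l] by simp
  moreover have "u \<in> tvecs" unfolding tvecs_def
  proof (safe)
    fix l assume "u l = \<infinity>" with uz[of l] show False by (simp add: z'_def)
  qed
  moreover have "\<exists>l. u l \<noteq> -\<infinity>"
  proof -
    obtain l where "a l \<noteq> -\<infinity>" using a(2) by blast
    then have "u l \<noteq> -\<infinity>" using au[of l] by auto
    then show ?thesis by blast
  qed
  ultimately show ?thesis by blast
qed

end

context tsetup begin

lemma V_ne: "V \<noteq> {}" using cover by blast

lemma span_intro:
  fixes x :: "'n \<Rightarrow> real"
  assumes H: "\<And>l. \<exists>v\<in>V. v l \<noteq> -\<infinity> \<and> (\<forall>k. v k + ereal (x l) \<le> v l + ereal (x k))"
  shows "(\<lambda>l. ereal (x l)) \<in> trop_span V"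
proof -
  define \<alpha> where "\<alpha> v = (INF k. ereal (x k) - v k)" for v :: "'n \<Rightarrow> ereal"
  have \<alpha>fin: "\<alpha> v \<noteq> \<infinity>" if vV: "v \<in> V" for v
  proof -
    obtain k where k: "v k \<noteq> -\<infinity>" using Vnz vV by blast
    have "v k \<noteq> \<infinity>" using notinf vV by blast
    with k obtain c where "v k = ereal c" by (cases "v k") auto
    moreover have "\<alpha> v \<le> ereal (x k) - v k" unfolding \<alpha>_def by (rule INF_lower) simp
    ultimately have "\<alpha> v \<le> ereal (x k - c)" by simp
    then show ?thesis by auto
  qed
  have "ereal (x l) = (SUP v\<in>V. \<alpha> v + v l)" for l
  proof (rule antisym)
    obtain v where v: "v \<in> V" "v l \<noteq> -\<infinity>" "\<And>k. v k + ereal (x l) \<le> v l + ereal (x k)"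
      using H[of l] by blast
    have "v l \<noteq> \<infinity>" using notinf v(1) by blast
    with v(2) obtain B where B: "v l = ereal B" by (cases "v l") auto
    have "ereal (x l - B) \<le> \<alpha> v" unfolding \<alpha>_def
    proof (rule INF_greatest)
      fix k
      show "ereal (x l - B) \<le> ereal (x k) - v k"
      proof (cases "v k")
        case (real c)
        with v(3)[of k] B show ?thesis by simp
      next
        case PInf then show ?thesis using notinf[OF v(1)] by blast
      qed simp
    qed
    then have "ereal (x l - B) + v l \<le> \<alpha> v + v l" by (rule add_right_mono)
    then have "ereal (x l) \<le> \<alpha> v + v l" using B by simp
    also have "\<dots> \<le> (SUP v\<in>V. \<alpha> v + v l)" using v(1) by (rule SUP_upper)
    finally show "ereal (x l) \<le> (SUP v\<in>V. \<alpha> v + v l)" .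
    show "(SUP v\<in>V. \<alpha> v + v l) \<le> ereal (x l)"
    proof (rule SUP_least)
      fix w assume w: "w \<in> V"
      show "\<alpha> w + w l \<le> ereal (x l)"
      proof (cases "w l")
        case (real c)
        have "\<alpha> w \<le> ereal (x l) - w l" unfolding \<alpha>_def by (rule INF_lower) simp
        then have "\<alpha> w + w l \<le> ereal (x l) - w l + w l" by (rule add_right_mono)
        then show ?thesis using real by simp
      next
        case PInf then show ?thesis using notinf[OF w] by blast
      next
        case MInf then show ?thesis using \<alpha>fin[OF w] by (cases "\<alpha> w") auto
      qed
    qed
  qed
  then have eqx: "(\<lambda>l. ereal (x l)) = (\<lambda>l. SUP v\<in>V. \<alpha> v + v l)" by (rule ext)
  have "\<forall>v\<in>V. \<alpha> v \<noteq> \<infinity>" using \<alpha>fin by blast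
  then show ?thesis unfolding trop_span_def mem_Collect_eq
    apply (rule_tac x=\<alpha> in exI)
    apply (rule conjI)
     apply assumption
    apply (rule eqx)
    done
qed

lemma span_elim:
  fixes x :: "'n \<Rightarrow> real"
  assumes "(\<lambda>l. ereal (x l)) \<in> trop_span V"
  shows "\<exists>v\<in>V. v l \<noteq> -\<infinity> \<and> (\<forall>k. v k + ereal (x l) \<le> v l + ereal (x k))"
proof -
  obtain \<alpha> where \<alpha>: "\<forall>v\<in>V. \<alpha> v \<noteq> \<infinity>" "(\<lambda>l. ereal (x l)) = (\<lambda>l. SUP v\<in>V. \<alpha> v + v l)"
    using assms unfolding trop_span_def by blast
  have xe: "ereal (x k) = (SUP v\<in>V. \<alpha> v + v k)" for k using \<alpha>(2) by metis
  obtain v where v: "v \<in> V" "(SUP v\<in>V. \<alpha> v + v l) = \<alpha> v + v l"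
    using finite_SUP_attained[OF finV V_ne] by blast
  have eq: "\<alpha> v + v l = ereal (x l)" using v xe[of l] by simp
  have "\<alpha> v \<noteq> \<infinity>" using \<alpha>(1) v(1) by blast
  moreover have "\<alpha> v \<noteq> -\<infinity>" using eq notinf[OF v(1), of l] by (cases "v l") auto
  ultimately obtain A where A: "\<alpha> v = ereal A" by (cases "\<alpha> v") auto
  have "v l \<noteq> \<infinity>" using notinf v(1) by blast
  moreover have "v l \<noteq> -\<infinity>" using eq A by auto
  ultimately obtain B where B: "v l = ereal B" by (cases "v l") auto
  have AB: "A + B = x l" using eq A B by simp
  have "v k + ereal (x l) \<le> v l + ereal (x k)" for k
  proof -
    have "\<alpha> v + v k \<le> ereal (x k)" using xe[of k] SUP_upper[OF v(1), of "\<lambda>v. \<alpha> v + v k"] by simp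
    then show ?thesis using A B AB by (cases "v k") auto
  qed
  then show ?thesis using v(1) \<open>v l \<noteq> -\<infinity>\<close> by blast
qed

lemma VI_to_Sp:
  assumes VI: "vert_int J w (ereal r) \<subseteq> trop_span V" and r: "0 \<le> r"
  shows "Sp (-r)"
proof -
  define z where "z k = - w k" for k
  have "T (\<lambda>k. ereal (z k)) l \<le> ereal (-r) + ereal (z l)" for l
  proof -
    define mu where "mu = (if l \<in> I then -r else r)"
    define x where "x k = 0 + w k + mu * (if k \<in> J then 1 else 0)" for k
    have "(\<lambda>k. ereal (x k)) \<in> vert_int J w (ereal r)"
      unfolding vert_int_def x_def mem_Collect_eq
      by (rule exI[of _ 0], rule exI[of _ mu]) (use r in \<open>simp add: mu_def\<close>)
    with VI have "(\<lambda>k. ereal (x k)) \<in> trop_span V" by blast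
    from span_elim[OF this, of l] obtain v where v: "v \<in> V" "v l \<noteq> -\<infinity>"
      "\<And>k. v k + ereal (x l) \<le> v l + ereal (x k)" by blast
    have "v l \<noteq> \<infinity>" using notinf v(1) by blast
    with v(2) obtain B where B: "v l = ereal B" by (cases "v l") auto
    have vV: "v \<in> Vl l" using v by (simp add: Vl_def)
    have bound: "v k + ereal (z k) \<le> ereal (B - r + z l)" if "k \<in> opp l" for k
    proof (cases "v k")
      case (real c)
      have "ereal (c + x l) \<le> ereal (B + x k)" using v(3)[of k] real B by simp
      then have "c + x l \<le> B + x k" by simp
      moreover have "x l - x k = w l - w k + r"
        using that IJU IJD by (auto simp: x_def mu_def in_opp)
      ultimately show ?thesis using real by (simp add: z_def x_def)
    next
      case PInf then show ?thesis using notinf[OF v(1)] by blast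
    qed simp
    have "T (\<lambda>k. ereal (z k)) l \<le> - v l + (SUP k\<in>opp l. v k + ereal (z k))"
      unfolding T_eq using vV by (rule INF_lower)
    also have "\<dots> \<le> - v l + ereal (B - r + z l)"
      by (intro add_left_mono SUP_least bound)
    also have "\<dots> = ereal (-r) + ereal (z l)" using B by simp
    finally show ?thesis .
  qed
  then show ?thesis unfolding Sp_def by blast
qed

definition VIcond :: "real \<Rightarrow> ('n \<Rightarrow> real) \<Rightarrow> bool" where
  "VIcond r b \<longleftrightarrow> (\<forall>l. \<exists>v\<in>V. v l \<noteq> -\<infinity> \<and>
      (\<forall>k\<in>opp l. v k + ereal (b k) + ereal r \<le> v l + ereal (b l)) \<and>
      (\<forall>k. k \<notin> opp l \<longrightarrow> v k + ereal (b k) \<le> v l + ereal (b l)))"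

lemma VIcond_imp:
  assumes "VIcond r b" shows "vert_int J (\<lambda>k. - b k) (ereal r) \<subseteq> trop_span V"
proof
  fix p assume "p \<in> vert_int J (\<lambda>k. - b k) (ereal r)"
  then obtain lam mu where p: "p = (\<lambda>l. ereal (lam + - b l + mu * (if l \<in> J then 1 else 0)))"
    and mu: "- ereal r \<le> ereal mu" "ereal mu \<le> ereal r"
    unfolding vert_int_def by blast
  from mu have mu': "-r \<le> mu" "mu \<le> r" by auto
  define x where "x l = lam + - b l + mu * (if l \<in> J then 1 else 0)" for l
  have "(\<lambda>l. ereal (x l)) \<in> trop_span V"
  proof (rule span_intro)
    fix l
    obtain v where v: "v \<in> V" "v l \<noteq> -\<infinity>"
      "\<And>k. k \<in> opp l \<Longrightarrow> v k + ereal (b k) + ereal r \<le> v l + ereal (b l)"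
      "\<And>k. k \<notin> opp l \<Longrightarrow> v k + ereal (b k) \<le> v l + ereal (b l)"
      using assms unfolding VIcond_def by blast
    have "v l \<noteq> \<infinity>" using notinf v(1) by blast
    with v(2) obtain B where B: "v l = ereal B" by (cases "v l") auto
    have "v k + ereal (x l) \<le> v l + ereal (x k)" for k
    proof (cases "v k")
      case (real c)
      show ?thesis
      proof (cases "k \<in> opp l")
        case True
        from v(3)[OF True] real B have "c + b k + r \<le> B + b l" by simp
        moreover have "mu * (if l \<in> J then 1 else 0) - mu * (if k \<in> J then 1 else 0) \<le> r"
          using True mu' IJU IJD by (auto simp: in_opp)
        ultimately show ?thesis using real B by (simp add: x_def)
      next
        case False
        from v(4)[OF False] real B have "c + b k \<le> B + b l" by simp
        moreover have "(if l \<in> J then 1 else 0) = (if k \<in> J then 1::real else 0)"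
          using False IJU IJD by (auto simp: in_opp)
        ultimately show ?thesis using real B by (simp add: x_def)
      qed
    next
      case PInf then show ?thesis using notinf[OF v(1)] by blast
    qed simp
    then show "\<exists>v\<in>V. v l \<noteq> -\<infinity> \<and> (\<forall>k. v k + ereal (x l) \<le> v l + ereal (x k))"
      using v(1,2) by blast
  qed
  then show "p \<in> trop_span V" using p by (simp add: x_def[abs_def])
qed

end

context tsetup begin

lemma opp_S: assumes "S = I \<or> S = J" "l \<in> S" shows "k \<in> opp l \<longleftrightarrow> k \<notin> S"
  using assms IJU IJD by (auto simp: in_opp)

lemma sum_bound:
  fixes f :: "'a \<Rightarrow> 'b::finite \<Rightarrow> real"
  assumes "finite A" "x \<in> A"
  shows "\<bar>f x y\<bar> \<le> (\<Sum>v\<in>A. \<Sum>k\<in>UNIV. \<bar>f v k\<bar>)"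
proof -
  have "\<bar>f x y\<bar> \<le> (\<Sum>k\<in>UNIV. \<bar>f x k\<bar>)" by (rule member_le_sum) auto
  also have "\<dots> \<le> (\<Sum>v\<in>A. \<Sum>k\<in>UNIV. \<bar>f v k\<bar>)"
    by (rule member_le_sum[where f="\<lambda>v. \<Sum>k\<in>UNIV. \<bar>f v k\<bar>"]) (use assms in \<open>auto intro: sum_nonneg\<close>)
  finally show ?thesis .
qed

lemma half_step:
  fixes a :: "'n \<Rightarrow> real" and S :: "'n set"
  assumes S: "S = I \<or> S = J" and r: "0 \<le> r"
    and sup: "\<forall>l\<in>S. T (\<lambda>k. ereal (a k)) l \<le> ereal (-r) + ereal (a l)"
  shows "\<exists>a'. (\<forall>k. k \<notin> S \<longrightarrow> a' k = a k) \<and> (\<forall>k. a' k \<le> a k) \<and>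
     (\<forall>l\<in>S. \<exists>v\<in>V. v l \<noteq> -\<infinity> \<and> (\<forall>k\<in>opp l. v k + ereal (a k) + ereal r \<le> v l + ereal (a' l))
         \<and> (\<forall>k. k \<notin> opp l \<longrightarrow> v k + ereal (a' k) \<le> v l + ereal (a' l)))"
proof -
  define A where "A = (\<lambda>k. ereal (a k))"
  have At: "A \<in> tvecs" by (simp add: A_def tvecs_def)
  define Bv where "Bv = (\<Sum>v\<in>V. \<Sum>k\<in>UNIV. \<bar>real_of_ereal (v k)\<bar>)"
  define Ba where "Ba = (\<Sum>v\<in>{a}. \<Sum>k\<in>UNIV. \<bar>a k\<bar>)"
  have vfin: "v k = ereal (real_of_ereal (v k))" if "v \<in> V" "v k \<noteq> -\<infinity>" for v k
    using notinf[OF that(1), of k] that(2) by (cases "v k") auto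
  have vB: "\<bar>real_of_ereal (v k)\<bar> \<le> Bv" if "v \<in> V" for v k
    unfolding Bv_def using sum_bound[OF finV that, of "\<lambda>v k. real_of_ereal (v k)"] by simp
  have aB: "\<bar>a k\<bar> \<le> Ba" for k
    unfolding Ba_def using sum_bound[of "{a}" a "\<lambda>v k. v k" k] by simp
  define W where "W l = {v\<in>V. v l \<noteq> -\<infinity> \<and> (\<forall>k. k \<notin> S \<longrightarrow> v k = -\<infinity>)}" for l
  define L0 where "L0 = {l\<in>S. W l \<noteq> {}}"
  have Wfin: "finite (W l)" for l using finV by (simp add: W_def)
  have vx_ex: "\<exists>v. v \<in> W l \<and> (\<forall>w\<in>W l. w l \<le> v l)" if "l \<in> L0" for l
  proof -
    have ne: "W l \<noteq> {}" using that by (simp add: L0_def)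
    obtain v where v: "v \<in> W l" "(SUP w\<in>W l. w l) = v l"
      using finite_SUP_attained[OF Wfin ne] by blast
    have "\<forall>w\<in>W l. w l \<le> v l" using v(2) by (metis SUP_upper)
    with v(1) show ?thesis by blast
  qed
  define vx where "vx l = (SOME v. v \<in> W l \<and> (\<forall>w\<in>W l. w l \<le> v l))" for l
  have vx: "vx l \<in> W l" "\<And>w. w \<in> W l \<Longrightarrow> w l \<le> vx l l" if "l \<in> L0" for l
    using someI_ex[OF vx_ex[OF that]] unfolding vx_def by blast+
  define xS where "xS l = real_of_ereal (vx l l)" for l
  have vxl: "vx l l = ereal (xS l)" if "l \<in> L0" for l
    using vx(1)[OF that] vfin[of "vx l" l] unfolding W_def xS_def by auto
  have xSB: "\<bar>xS l\<bar> \<le> Bv" if "l \<in> L0" for l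
    using vx(1)[OF that] vB unfolding W_def xS_def by auto
  have vt_ex: "\<exists>v. v \<in> Vl l \<and> T A l = - v l + (SUP k\<in>opp l. v k + A k)" for l
    using finite_INF_attained[OF Vl_fin[of l] Vl_ne[of l], where f="\<lambda>v. - v l + (SUP k\<in>opp l. v k + A k)"]
    unfolding T_eq by blast
  define vt where "vt l = (SOME v. v \<in> Vl l \<and> T A l = - v l + (SUP k\<in>opp l. v k + A k))" for l
  have vt: "vt l \<in> Vl l" "T A l = - vt l l + (SUP k\<in>opp l. vt l k + A k)" for l
    using someI_ex[OF vt_ex[of l]] unfolding vt_def by blast+
  have Tfin: "\<exists>q B. (SUP k\<in>opp l. vt l k + A k) = ereal q \<and> vt l l = ereal B \<and> - Bv - Ba \<le> q
       \<and> T A l = ereal (q - B)" if "l \<in> S" "l \<notin> L0" for l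
  proof -
    have vV: "vt l \<in> V" "vt l l \<noteq> -\<infinity>" using vt(1)[of l] by (auto simp: Vl_def)
    have "vt l \<notin> W l" using that by (auto simp: L0_def)
    then obtain k where k: "k \<notin> S" "vt l k \<noteq> -\<infinity>" using vV by (auto simp: W_def)
    have kopp: "k \<in> opp l" using opp_S[OF S that(1)] k(1) by simp
    have lowk: "vt l k + A k \<le> (SUP k\<in>opp l. vt l k + A k)" using kopp by (rule SUP_upper)
    obtain k' where k': "k' \<in> opp l" "(SUP k\<in>opp l. vt l k + A k) = vt l k' + A k'"
      using finite_SUP_attained[OF opp_fin opp_ne] by blast
    have "vt l k' \<noteq> -\<infinity>"
    proof
      assume "vt l k' = -\<infinity>"
      then have "(SUP k\<in>opp l. vt l k + A k) = -\<infinity>" using k'(2) by (simp add: A_def)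
      with lowk vfin[OF vV(1) k(2)] show False by (simp add: A_def)
    qed
    then obtain q where q: "(SUP k\<in>opp l. vt l k + A k) = ereal q"
      using k'(2) vfin[OF vV(1)] by (metis A_def plus_ereal.simps(1))
    obtain B where B: "vt l l = ereal B" using vfin[OF vV] by blast
    obtain Ck where Ck: "vt l k = ereal Ck" using vfin[OF vV(1) k(2)] by blast
    have "ereal (Ck + a k) \<le> ereal q" using lowk q Ck by (simp add: A_def)
    moreover have "\<bar>Ck\<bar> \<le> Bv" using vB[OF vV(1), of k] Ck by simp
    ultimately have "- Bv - Ba \<le> q" using aB[of k] by simp
    moreover have "T A l = ereal (q - B)" using vt(2)[of l] q B by simp
    ultimately show ?thesis using q B by blast
  qed
  define M where "M = - 3 * Bv - Ba"
  define a' where "a' l = (if l \<notin> S then a l else if l \<in> L0 then M - xS l else r + real_of_ereal (T A l))" for l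
  have P1: "\<forall>k. k \<notin> S \<longrightarrow> a' k = a k" by (simp add: a'_def)
  have P2: "a' k \<le> a k" for k
  proof (cases "k \<in> S")
    case True
    show ?thesis
    proof (cases "k \<in> L0")
      case True
      have "0 \<le> Bv" unfolding Bv_def by (intro sum_nonneg abs_ge_zero)
      then show ?thesis using xSB[OF True] aB[of k] \<open>k \<in> S\<close> \<open>k \<in> L0\<close>
        by (simp add: a'_def M_def abs_le_iff)
    next
      case False
      obtain q B where qB: "T A k = ereal (q - B)" using Tfin[OF True False] by blast
      have "T A k \<le> ereal (-r) + ereal (a k)" using sup True by (simp add: A_def)
      then show ?thesis using qB True False by (simp add: a'_def)
    qed
  qed (simp add: a'_def)
  have Bv0: "0 \<le> Bv" unfolding Bv_def by (intro sum_nonneg abs_ge_zero)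
  have P3: "\<exists>v\<in>V. v l \<noteq> -\<infinity> \<and> (\<forall>k\<in>opp l. v k + ereal (a k) + ereal r \<le> v l + ereal (a' l))
         \<and> (\<forall>k. k \<notin> opp l \<longrightarrow> v k + ereal (a' k) \<le> v l + ereal (a' l))" if lS: "l \<in> S" for l
  proof (cases "l \<in> L0")
    case True
    define v where "v = vx l"
    have vW: "v \<in> W l" using vx(1)[OF True] by (simp add: v_def)
    then have vV: "v \<in> V" "v l \<noteq> -\<infinity>" and vS: "\<And>k. k \<notin> S \<Longrightarrow> v k = -\<infinity>" by (auto simp: W_def)
    have vl: "v l = ereal (xS l)" using vxl[OF True] by (simp add: v_def)
    have c1: "v k + ereal (a k) + ereal r \<le> v l + ereal (a' l)" if "k \<in> opp l" for k
      using vS[of k] opp_S[OF S lS, of k] that by simp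
    have c2: "v k + ereal (a' k) \<le> v l + ereal (a' l)" if "k \<notin> opp l" for k
    proof (cases "v k = -\<infinity>")
      case False
      have kS: "k \<in> S" using opp_S[OF S lS, of k] that by simp
      have "v \<in> W k" using vV(1) False vS by (simp add: W_def)
      then have kL: "k \<in> L0" using kS by (auto simp: L0_def)
      have "v k \<le> ereal (xS k)" using vx(2)[OF kL \<open>v \<in> W k\<close>] vxl[OF kL] by simp
      then have "v k + ereal (a' k) \<le> ereal (xS k) + ereal (a' k)" by (rule add_right_mono)
      also have "\<dots> = ereal M" using kS kL by (simp add: a'_def)
      also have "\<dots> = v l + ereal (a' l)" using vl lS True by (simp add: a'_def)
      finally show ?thesis .
    qed simp
    show ?thesis using vV c1 c2 by blast
  next
    case False
    define v where "v = vt l"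
    obtain q B where qB: "(SUP k\<in>opp l. v k + A k) = ereal q" "v l = ereal B" "- Bv - Ba \<le> q"
      "T A l = ereal (q - B)" using Tfin[OF lS False] unfolding v_def by blast
    have vV: "v \<in> V" "v l \<noteq> -\<infinity>" using vt(1)[of l] by (auto simp: v_def Vl_def)
    have a'l: "a' l = r + (q - B)" using lS False qB(4) by (simp add: a'_def)
    have rhs: "v l + ereal (a' l) = ereal (r + q)" using qB(2) a'l by simp
    have c1: "v k + ereal (a k) + ereal r \<le> v l + ereal (a' l)" if "k \<in> opp l" for k
    proof -
      have "v k + A k \<le> ereal q" using SUP_upper[OF that, of "\<lambda>k. v k + A k"] qB(1) by simp
      then have "v k + A k + ereal r \<le> ereal q + ereal r" by (rule add_right_mono)
      then show ?thesis using rhs by (simp add: A_def add.commute)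
    qed
    have c2: "v k + ereal (a' k) \<le> v l + ereal (a' l)" if "k \<notin> opp l" for k
    proof (cases "v k = -\<infinity>")
      case False
      have kS: "k \<in> S" using opp_S[OF S lS, of k] that by simp
      obtain C where C: "v k = ereal C" using vfin[OF vV(1) False] by blast
      have CB: "\<bar>C\<bar> \<le> Bv" using vB[OF vV(1), of k] C by simp
      show ?thesis
      proof (cases "k \<in> L0")
        case True
        have "C + (M - xS k) \<le> r + q" using CB xSB[OF True] qB(3) r Bv0 by (simp add: M_def)
        then show ?thesis using C rhs kS True by (simp add: a'_def)
      next
        case kL: False
        obtain q' B' where q'B': "T A k = ereal (q' - B')" using Tfin[OF kS kL] by blast
        have vVk: "v \<in> Vl k" using vV(1) False by (simp add: Vl_def)
        have "T A k \<le> - v k + (SUP k'\<in>opp k. v k' + A k')" unfolding T_eq using vVk by (rule INF_lower)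
        also have "(SUP k'\<in>opp k. v k' + A k') = (SUP k'\<in>opp l. v k' + A k')"
        proof -
          have "opp k = opp l" using opp_S[OF S lS] opp_S[OF S kS] by blast
          then show ?thesis by simp
        qed
        finally have "ereal (q' - B') \<le> ereal (q - C)" using q'B' qB(1) C by simp
        then have "C + (r + (q' - B')) \<le> r + q" by simp
        then show ?thesis using C rhs kS kL q'B' by (simp add: a'_def)
      qed
    qed simp
    show ?thesis using vV c1 c2 by blast
  qed
  show ?thesis using P1 P2 P3 by blast
qed

lemma Sp_to_VIcond:
  assumes "Sp (-r)" "0 \<le> r" shows "\<exists>b. VIcond r b"
proof -
  obtain z where z: "\<And>l. T (\<lambda>k. ereal (z k)) l \<le> ereal (-r) + ereal (z l)"
    using assms(1) unfolding Sp_def by blast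
  obtain b1 where b1: "\<forall>k. k \<notin> I \<longrightarrow> b1 k = z k" "\<forall>k. b1 k \<le> z k"
    "\<forall>l\<in>I. \<exists>v\<in>V. v l \<noteq> -\<infinity> \<and> (\<forall>k\<in>opp l. v k + ereal (z k) + ereal r \<le> v l + ereal (b1 l))
         \<and> (\<forall>k. k \<notin> opp l \<longrightarrow> v k + ereal (b1 k) \<le> v l + ereal (b1 l))"
    using half_step[of I r z] assms(2) z by blast
  have supJ: "\<forall>l\<in>J. T (\<lambda>k. ereal (b1 k)) l \<le> ereal (-r) + ereal (b1 l)"
  proof
    fix l assume "l \<in> J"
    then have "l \<notin> I" using IJD by blast
    have "T (\<lambda>k. ereal (b1 k)) l \<le> T (\<lambda>k. ereal (z k)) l" by (rule T_mono) (simp add: b1(2))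
    also have "\<dots> \<le> ereal (-r) + ereal (z l)" by (rule z)
    finally show "T (\<lambda>k. ereal (b1 k)) l \<le> ereal (-r) + ereal (b1 l)" using b1(1) \<open>l \<notin> I\<close> by simp
  qed
  obtain b where b: "\<forall>k. k \<notin> J \<longrightarrow> b k = b1 k" "\<forall>k. b k \<le> b1 k"
    "\<forall>l\<in>J. \<exists>v\<in>V. v l \<noteq> -\<infinity> \<and> (\<forall>k\<in>opp l. v k + ereal (b1 k) + ereal r \<le> v l + ereal (b l))
         \<and> (\<forall>k. k \<notin> opp l \<longrightarrow> v k + ereal (b k) \<le> v l + ereal (b l))"
    using half_step[of J r b1] assms(2) supJ by blast
  have "\<exists>v\<in>V. v l \<noteq> -\<infinity> \<and> (\<forall>k\<in>opp l. v k + ereal (b k) + ereal r \<le> v l + ereal (b l)) \<and>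
      (\<forall>k. k \<notin> opp l \<longrightarrow> v k + ereal (b k) \<le> v l + ereal (b l))" for l
  proof (cases "l \<in> J")
    case True
    then obtain v where v: "v \<in> V" "v l \<noteq> -\<infinity>"
      "\<forall>k\<in>opp l. v k + ereal (b1 k) + ereal r \<le> v l + ereal (b l)"
      "\<forall>k. k \<notin> opp l \<longrightarrow> v k + ereal (b k) \<le> v l + ereal (b l)" using b(3) by blast
    have "\<forall>k\<in>opp l. v k + ereal (b k) + ereal r \<le> v l + ereal (b l)"
    proof
      fix k assume "k \<in> opp l"
      then have "k \<notin> J" using True IJD by (auto simp: in_opp)
      then show "v k + ereal (b k) + ereal r \<le> v l + ereal (b l)" using v(3) \<open>k \<in> opp l\<close> b(1) by simp
    qed
    then show ?thesis using v by blast
  next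
    case False
    then have lI: "l \<in> I" using IJU by blast
    then obtain v where v: "v \<in> V" "v l \<noteq> -\<infinity>"
      "\<forall>k\<in>opp l. v k + ereal (z k) + ereal r \<le> v l + ereal (b1 l)"
      "\<forall>k. k \<notin> opp l \<longrightarrow> v k + ereal (b1 k) \<le> v l + ereal (b1 l)" using b1(3) by blast
    have bl: "b l = b1 l" using b(1) False by simp
    have "\<forall>k\<in>opp l. v k + ereal (b k) + ereal r \<le> v l + ereal (b l)"
    proof
      fix k assume k: "k \<in> opp l"
      then have "k \<notin> I" using lI IJD by (auto simp: in_opp)
      then have "b1 k = z k" using b1(1) by blast
      moreover have "b k \<le> b1 k" using b(2) by blast
      ultimately have "b k \<le> z k" by simp
      then have "v k + ereal (b k) + ereal r \<le> v k + ereal (z k) + ereal r"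
        by (intro add_right_mono add_left_mono) simp
      also have "\<dots> \<le> v l + ereal (b l)" using v(3) k bl by simp
      finally show "v k + ereal (b k) + ereal r \<le> v l + ereal (b l)" .
    qed
    moreover have "\<forall>k. k \<notin> opp l \<longrightarrow> v k + ereal (b k) \<le> v l + ereal (b l)"
    proof (intro allI impI)
      fix k assume k: "k \<notin> opp l"
      then have "k \<in> I" using lI IJU by (auto simp: in_opp)
      then have "k \<notin> J" using IJD by blast
      then show "v k + ereal (b k) \<le> v l + ereal (b l)" using v(4) k b(1) bl by simp
    qed
    ultimately show ?thesis using v by blast
  qed
  then show ?thesis unfolding VIcond_def by blast
qed

lemma Sp_to_VI:
  assumes "Sp (-r)" "0 \<le> r" shows "\<exists>c. vert_int J c (ereal r) \<subseteq> trop_span V"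
  using Sp_to_VIcond[OF assms] VIcond_imp by blast

end

context tsetup begin

lemma hd_le:
  assumes "\<And>k. ereal mu + y k \<le> v k" "\<And>k. v k \<le> ereal la + y k"
  shows "hilbert_d v y \<le> ereal (la - mu)"
  unfolding hilbert_d_def by (rule Inf_lower) (use assms in blast)

lemma shift_hyp:
  fixes S1 S2 :: "'n set" and a v :: "'n \<Rightarrow> ereal"
  assumes S: "S1 \<inter> S2 = {}" "S2 \<noteq> {}" and vt: "v \<in> tvecs"
    and P: "(SUP k\<in>S1. a k + v k) = ereal P" and Q: "(SUP k\<in>S2. a k + v k) = ereal Q" and PQ: "Q \<le> P"
  defines "y \<equiv> (\<lambda>k. if k \<in> S2 then v k + ereal (P - Q) else v k)"
  shows "y \<in> tvecs" "(SUP k\<in>S1. a k + y k) = ereal P" "(SUP k\<in>S2. a k + y k) = ereal P"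
    "\<And>k. ereal (-(P - Q)) + y k \<le> v k" "\<And>k. v k \<le> ereal 0 + y k"
proof -
  show "y \<in> tvecs" using vt by (auto simp: y_def tvecs_def)
  have "(SUP k\<in>S1. a k + y k) = (SUP k\<in>S1. a k + v k)"
    by (rule SUP_cong) (use S(1) in \<open>auto simp: y_def\<close>)
  then show "(SUP k\<in>S1. a k + y k) = ereal P" using P by simp
  have "(SUP k\<in>S2. a k + y k) = (SUP k\<in>S2. ereal (P - Q) + (a k + v k))"
    by (rule SUP_cong) (auto simp: y_def ac_simps)
  also have "\<dots> = ereal (P - Q) + (SUP k\<in>S2. a k + v k)" using S(2) by (rule SUP_ereal_add_real)
  finally show "(SUP k\<in>S2. a k + y k) = ereal P" using Q by simp
  fix k
  show "ereal (-(P - Q)) + y k \<le> v k"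
  proof (cases "k \<in> S2")
    case True
    then show ?thesis using ereal_cancel_left[of "P - Q" "v k"] by (simp add: y_def add.commute)
  next
    case False
    have "ereal (-(P - Q)) + v k \<le> 0 + v k" by (rule add_right_mono) (use PQ in simp)
    then show ?thesis using False by (simp add: y_def)
  qed
  show "v k \<le> ereal 0 + y k"
  proof (cases "k \<in> S2")
    case True
    have "v k + 0 \<le> v k + ereal (P - Q)" by (rule add_left_mono) (use PQ in simp)
    then show ?thesis using True by (simp add: y_def)
  qed (simp add: y_def)
qed

lemma sup_fin:
  fixes a v :: "'n \<Rightarrow> ereal"
  assumes "a \<in> tvecs" "v \<in> tvecs" "S \<noteq> {}"
  shows "(SUP k\<in>S. a k + v k) \<noteq> \<infinity>"
proof -
  obtain k where "k \<in> S" "(SUP k\<in>S. a k + v k) = a k + v k"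
    using finite_SUP_attained[OF finite[of S] assms(3)] by blast
  then show ?thesis using assms(1,2) by (auto simp: tvecs_def)
qed

lemma sub_side:
  assumes at: "a \<in> tvecs" and sub: "\<And>l. ereal lam + a l \<le> T a l" and vV: "v \<in> V"
    and side: "S = I \<and> l \<in> I \<or> S = J \<and> l \<in> J"
  shows "ereal lam + (SUP k\<in>S. a k + v k) \<le> (SUP k\<in>opp l. a k + v k)"
proof -
  have Sne: "S \<noteq> {}" using side Ine Jne by blast
  have "ereal lam + (SUP k\<in>S. a k + v k) = (SUP k\<in>S. ereal lam + (a k + v k))"
    using Sne by (rule SUP_ereal_add_real[symmetric])
  also have "\<dots> \<le> (SUP k\<in>opp l. a k + v k)"
  proof (rule SUP_least)
    fix i assume iS: "i \<in> S"
    have oppi: "opp i = opp l" using side iS IJU IJD by (auto simp: opp_def)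
    show "ereal lam + (a i + v i) \<le> (SUP k\<in>opp l. a k + v k)"
    proof (cases "a i = -\<infinity> \<or> v i = -\<infinity>")
      case True
      have "a i \<noteq> \<infinity>" "v i \<noteq> \<infinity>" using at notinf[OF vV, of i] by (auto simp: tvecs_def)
      then have aiv: "a i + v i = -\<infinity>" using True by (cases "a i"; cases "v i") auto
      show ?thesis unfolding aiv by simp
    next
      case False
      then have vi: "v \<in> Vl i" using vV by (simp add: Vl_def)
      obtain B where B: "v i = ereal B" using False notinf[OF vV, of i] by (cases "v i") auto
      have "ereal lam + a i \<le> - v i + (SUP k\<in>opp i. v k + a k)"
        using sub[of i] INF_lower[OF vi, of "\<lambda>v. - v i + (SUP k\<in>opp i. v k + a k)"]
        unfolding T_eq by (meson order_trans)
      then have "ereal lam + a i + v i \<le> - v i + (SUP k\<in>opp i. v k + a k) + v i" by (rule add_right_mono)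
      also have "\<dots> = (SUP k\<in>opp i. v k + a k)" using B by (cases "(SUP k\<in>opp i. v k + a k)") auto
      finally show ?thesis using oppi by (simp add: ac_simps)
    qed
  qed
  finally show ?thesis .
qed

lemma dist_le:
  assumes at: "a \<in> tvecs" and lam: "lam \<le> 0" and sub: "\<And>l. ereal lam + a l \<le> T a l"
  shows "dist_H V (trop_hyp I J a) \<le> ereal (-lam)"
  unfolding dist_H_def
proof (rule SUP_least)
  fix v assume vV: "v \<in> V"
  have vt: "v \<in> tvecs" using vV Vt by blast
  define p where "p = (SUP k\<in>I. a k + v k)"
  define q where "q = (SUP k\<in>J. a k + v k)"
  obtain lI where lI: "lI \<in> I" using Ine by blast
  obtain lJ where lJ: "lJ \<in> J" using Jne by blast
  have oI: "opp lI = J" using lI by (simp add: opp_def)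
  have oJ: "opp lJ = I" using lJ IJD by (auto simp: opp_def)
  have pq: "ereal lam + p \<le> q" using sub_side[OF at sub vV, of I lI] lI oI by (simp add: p_def q_def)
  have qp: "ereal lam + q \<le> p" using sub_side[OF at sub vV, of J lJ] lJ oJ by (simp add: p_def q_def)
  have pfin: "p \<noteq> \<infinity>" "q \<noteq> \<infinity>" unfolding p_def q_def using sup_fin[OF at vt] Ine Jne by auto
  show "(INF y\<in>trop_hyp I J a. hilbert_d v y) \<le> ereal (-lam)"
  proof (cases "p = -\<infinity>")
    case True
    then have "q = -\<infinity>" using qp pfin by (cases q) auto
    then have "v \<in> trop_hyp I J a" using True vt by (simp add: trop_hyp_def p_def q_def)
    then have "(INF y\<in>trop_hyp I J a. hilbert_d v y) \<le> hilbert_d v v" by (rule INF_lower)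
    also have "\<dots> \<le> ereal (0 - 0)" by (rule hd_le) auto
    finally show ?thesis using lam by (simp add: order_trans)
  next
    case False
    then obtain P where P: "p = ereal P" using pfin by (cases p) auto
    have "q \<noteq> -\<infinity>" using pq P by auto
    then obtain Q where Q: "q = ereal Q" using pfin by (cases q) auto
    have PQ1: "lam + P \<le> Q" using pq P Q by simp
    have PQ2: "lam + Q \<le> P" using qp P Q by simp
    show ?thesis
    proof (cases "Q \<le> P")
      case True
      define y where "y = (\<lambda>k. if k \<in> J then v k + ereal (P - Q) else v k)"
      note sh0 = shift_hyp[OF IJD Jne vt, of a P Q, OF P[unfolded p_def] Q[unfolded q_def] True]
      have sh: "y \<in> tvecs" "(SUP k\<in>I. a k + y k) = ereal P" "(SUP k\<in>J. a k + y k) = ereal P"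
        "\<And>k. ereal (-(P - Q)) + y k \<le> v k" "\<And>k. v k \<le> ereal 0 + y k"
        using sh0 unfolding y_def by auto
      have "y \<in> trop_hyp I J a" using sh(1-3) by (simp add: trop_hyp_def)
      then have "(INF y\<in>trop_hyp I J a. hilbert_d v y) \<le> hilbert_d v y" by (rule INF_lower)
      also have "\<dots> \<le> ereal (0 - (-(P - Q)))" by (rule hd_le) (use sh(4,5) in auto)
      finally show ?thesis using PQ1 by (simp add: order_trans)
    next
      case False
      define y where "y = (\<lambda>k. if k \<in> I then v k + ereal (Q - P) else v k)"
      have JI: "J \<inter> I = {}" using IJD by blast
      have QP: "P \<le> Q" using False by simp
      note sh0 = shift_hyp[OF JI Ine vt, of a Q P, OF Q[unfolded q_def] P[unfolded p_def] QP]
      have sh: "y \<in> tvecs" "(SUP k\<in>J. a k + y k) = ereal Q" "(SUP k\<in>I. a k + y k) = ereal Q"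
        "\<And>k. ereal (-(Q - P)) + y k \<le> v k" "\<And>k. v k \<le> ereal 0 + y k"
        using sh0 unfolding y_def by auto
      have "y \<in> trop_hyp I J a" using sh(1-3) by (simp add: trop_hyp_def)
      then have "(INF y\<in>trop_hyp I J a. hilbert_d v y) \<le> hilbert_d v y" by (rule INF_lower)
      also have "\<dots> \<le> ereal (0 - (-(Q - P)))" by (rule hd_le) (use sh(4,5) in auto)
      finally show ?thesis using PQ2 by (simp add: order_trans)
    qed
  qed
qed


lemma dist_ge:
  assumes at: "a \<in> tvecs" and d: "dist_H V (trop_hyp I J a) < ereal s"
  shows "ereal (-s) + a l \<le> T a l"
proof (cases "a l = -\<infinity>")
  case True then show ?thesis by simp
next
  case False
  then obtain A where A: "a l = ereal A" using at by (cases "a l") (auto simp: tvecs_def)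
  show ?thesis unfolding T_eq
  proof (rule INF_greatest)
    fix v assume vVl: "v \<in> Vl l"
    then have vV: "v \<in> V" and vl: "v l \<noteq> -\<infinity>" by (auto simp: Vl_def)
    obtain B where B: "v l = ereal B" using vl notinf[OF vV, of l] by (cases "v l") auto
    have "(INF y\<in>trop_hyp I J a. hilbert_d v y) < ereal s"
      using d SUP_upper[OF vV, of "\<lambda>v. INF y\<in>trop_hyp I J a. hilbert_d v y"] unfolding dist_H_def
      by (meson le_less_trans)
    then obtain y where yH: "y \<in> trop_hyp I J a" and hd: "hilbert_d v y < ereal s"
      by (auto simp: INF_less_iff)
    from hd obtain la mu where lm: "ereal (la - mu) < ereal s"
      and bnd: "\<forall>k. ereal mu + y k \<le> v k \<and> v k \<le> ereal la + y k"
      unfolding hilbert_d_def Inf_less_iff by blast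
    have yt: "y \<in> tvecs" and yeq: "(SUP k\<in>I. a k + y k) = (SUP k\<in>J. a k + y k)"
      using yH by (auto simp: trop_hyp_def)
    define S0 where "S0 = (if l \<in> I then I else J)"
    have lS0: "l \<in> S0" using IJU by (auto simp: S0_def)
    have sw: "(SUP k\<in>opp l. a k + y k) = (SUP k\<in>S0. a k + y k)"
      using yeq by (auto simp: S0_def opp_def)
    have yl: "ereal (B - la) \<le> y l"
    proof -
      have "ereal B \<le> ereal la + y l" using bnd B by metis
      moreover have "y l \<noteq> \<infinity>" using yt by (auto simp: tvecs_def)
      ultimately show ?thesis by (cases "y l") auto
    qed
    have "ereal (A + (B - la)) \<le> a l + y l" using A yl by (cases "y l") auto
    also have "\<dots> \<le> (SUP k\<in>S0. a k + y k)" using lS0 by (rule SUP_upper)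
    finally have s0: "ereal (A + (B - la)) \<le> (SUP k\<in>opp l. a k + y k)" using sw by simp
    have "ereal mu + (SUP k\<in>opp l. a k + y k) = (SUP k\<in>opp l. ereal mu + (a k + y k))"
      using opp_ne by (rule SUP_ereal_add_real[symmetric])
    also have "\<dots> \<le> (SUP k\<in>opp l. v k + a k)"
    proof (rule SUP_mono)
      fix k assume "k \<in> opp l"
      have "ereal mu + y k + a k \<le> v k + a k" using bnd by (intro add_right_mono) blast
      then have "ereal mu + (a k + y k) \<le> v k + a k" by (simp add: ac_simps)
      then show "\<exists>m\<in>opp l. ereal mu + (a k + y k) \<le> v m + a m"
        using \<open>k \<in> opp l\<close> by blast
    qed
    finally have s1: "ereal mu + (SUP k\<in>opp l. a k + y k) \<le> (SUP k\<in>opp l. v k + a k)" .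
    have "ereal (mu + (A + (B - la))) \<le> (SUP k\<in>opp l. v k + a k)"
      using add_left_mono[OF s0, of "ereal mu"] s1 by simp
    then have "- v l + ereal (mu + (A + (B - la))) \<le> - v l + (SUP k\<in>opp l. v k + a k)"
      by (rule add_left_mono)
    moreover have "ereal (-s) + a l \<le> - v l + ereal (mu + (A + (B - la)))"
      using A B lm by simp
    ultimately show "ereal (-s) + a l \<le> - v l + (SUP k\<in>opp l. v k + a k)" by (rule order_trans[rotated])
  qed
qed

end

definition eexp :: "ereal \<Rightarrow> real" where
  "eexp x = (case x of ereal r \<Rightarrow> exp r | _ \<Rightarrow> 0)"

definition elog :: "real \<Rightarrow> ereal" where
  "elog y = (if y \<le> 0 then -\<infinity> else ereal (ln y))"

lemma eexp_simps[simp]: "eexp (ereal r) = exp r" "eexp (-\<infinity>) = 0"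
  by (auto simp: eexp_def)

lemma eexp_nonneg: "0 \<le> eexp x" by (cases x) (auto simp: eexp_def)

lemma eexp_elog: "0 \<le> y \<Longrightarrow> eexp (elog y) = y" by (auto simp: elog_def)

lemma eexp_add: "x \<noteq> \<infinity> \<Longrightarrow> y \<noteq> \<infinity> \<Longrightarrow> eexp (x + y) = eexp x * eexp y"
  by (cases x; cases y) (auto simp: exp_add)

lemma eexp_mono: "x \<le> y \<Longrightarrow> y \<noteq> \<infinity> \<Longrightarrow> eexp x \<le> eexp y"
  by (cases x; cases y) auto

lemma eexp_le_iff: "x \<noteq> \<infinity> \<Longrightarrow> y \<noteq> \<infinity> \<Longrightarrow> eexp x \<le> eexp y \<longleftrightarrow> x \<le> y"
  by (cases x; cases y) auto

lemma eexp_SUP: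
  assumes "finite A" "A \<noteq> {}" "\<And>a. a \<in> A \<Longrightarrow> g a \<noteq> \<infinity>"
  shows "eexp (SUP a\<in>A. g a) = Max ((\<lambda>a. eexp (g a)) ` A)"
proof -
  obtain a0 where a0: "a0 \<in> A" "(SUP a\<in>A. g a) = g a0" using finite_SUP_attained[OF assms(1,2)] by blast
  have "Max ((\<lambda>a. eexp (g a)) ` A) = eexp (g a0)"
  proof (rule Max_eqI)
    fix y assume "y \<in> (\<lambda>a. eexp (g a)) ` A"
    then obtain a where a: "a \<in> A" "y = eexp (g a)" by blast
    have "g a \<le> g a0" using a0 SUP_upper[OF a(1), of g] by simp
    then show "y \<le> eexp (g a0)" using a eexp_mono assms(3)[OF a0(1)] by blast
  qed (use assms a0 in auto)
  then show ?thesis using a0 by simp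
qed

lemma eexp_INF:
  assumes "finite A" "A \<noteq> {}" "\<And>a. a \<in> A \<Longrightarrow> g a \<noteq> \<infinity>"
  shows "eexp (INF a\<in>A. g a) = Min ((\<lambda>a. eexp (g a)) ` A)"
proof -
  obtain a0 where a0: "a0 \<in> A" "(INF a\<in>A. g a) = g a0" using finite_INF_attained[OF assms(1,2)] by blast
  have "Min ((\<lambda>a. eexp (g a)) ` A) = eexp (g a0)"
  proof (rule Min_eqI)
    fix y assume "y \<in> (\<lambda>a. eexp (g a)) ` A"
    then obtain a where a: "a \<in> A" "y = eexp (g a)" by blast
    have "g a0 \<le> g a" using a0 INF_lower[OF a(1), of g] by simp
    then show "eexp (g a0) \<le> y" using a eexp_mono assms(3)[OF a(1)] by blast
  qed (use assms a0 in auto)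
  then show ?thesis using a0 by simp
qed

lemma cont_Max:
  fixes f :: "'a \<Rightarrow> 'b::topological_space \<Rightarrow> real"
  assumes "finite A" "A \<noteq> {}" "\<And>a. a \<in> A \<Longrightarrow> continuous_on S (f a)"
  shows "continuous_on S (\<lambda>x. Max ((\<lambda>a. f a x) ` A))"
  using assms
proof (induction A rule: finite_ne_induct)
  case (singleton x) then show ?case by simp
next
  case (insert a F)
  have "continuous_on S (\<lambda>x. max (f a x) (Max ((\<lambda>a. f a x) ` F)))"
    using insert by (intro continuous_on_max) auto
  then show ?case using insert by simp
qed

lemma cont_Min:
  fixes f :: "'a \<Rightarrow> 'b::topological_space \<Rightarrow> real"
  assumes "finite A" "A \<noteq> {}" "\<And>a. a \<in> A \<Longrightarrow> continuous_on S (f a)"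
  shows "continuous_on S (\<lambda>x. Min ((\<lambda>a. f a x) ` A))"
  using assms
proof (induction A rule: finite_ne_induct)
  case (singleton x) then show ?case by simp
next
  case (insert a F)
  have "continuous_on S (\<lambda>x. min (f a x) (Min ((\<lambda>a. f a x) ` F)))"
    using insert by (intro continuous_on_min) auto
  then show ?case using insert by simp
qed

lemma cont_nth: "continuous_on S (\<lambda>y::real^'n. y $ k)"
  by (rule linear_continuous_on) (rule bounded_linear_vec_nth)

context tsetup begin

definition wt :: "('n \<Rightarrow> ereal) \<Rightarrow> 'n \<Rightarrow> 'n \<Rightarrow> real" where
  "wt v l k = eexp (v k) * exp (- real_of_ereal (v l))"

definition F :: "real^'n \<Rightarrow> 'n \<Rightarrow> real" where
  "F y l = Min ((\<lambda>v. Max ((\<lambda>k. wt v l k * y $ k) ` opp l)) ` Vl l)"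

lemma F_cont: "continuous_on S (\<lambda>y. F y l)"
  unfolding F_def
  by (intro cont_Min cont_Max Vl_fin Vl_ne opp_fin opp_ne continuous_on_mult_left cont_nth)

lemma F_nonneg: assumes "\<And>k. 0 \<le> y $ k" shows "0 \<le> F y l"
proof -
  have "0 \<le> Max ((\<lambda>k. wt v l k * y $ k) ` opp l)" for v
  proof -
    obtain k where "k \<in> opp l" using opp_ne by blast
    moreover have "0 \<le> wt v l k * y $ k" using assms eexp_nonneg by (simp add: wt_def)
    ultimately show ?thesis by (meson Max_ge finite_imageI opp_fin image_eqI order_trans)
  qed
  then show ?thesis unfolding F_def using Vl_fin Vl_ne by simp
qed

lemma F_T: assumes ut: "u \<in> tvecs" shows "eexp (T u l) = F (\<chi> k. eexp (u k)) l"
proof -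
  have ufin: "u k \<noteq> \<infinity>" for k using ut by (auto simp: tvecs_def)
  have inner: "eexp (- v l + (SUP k\<in>opp l. v k + u k)) = Max ((\<lambda>k. wt v l k * eexp (u k)) ` opp l)"
    if vV: "v \<in> Vl l" for v
  proof -
    have vV': "v \<in> V" "v l \<noteq> -\<infinity>" using vV by (auto simp: Vl_def)
    obtain B where B: "v l = ereal B" using vV' notinf[OF vV'(1), of l] by (cases "v l") auto
    have sfin: "v k + u k \<noteq> \<infinity>" for k using notinf[OF vV'(1), of k] ufin[of k] by (cases "v k"; cases "u k") auto
    have "eexp (- v l + (SUP k\<in>opp l. v k + u k)) = exp (-B) * eexp (SUP k\<in>opp l. v k + u k)"
    proof -
      have "(SUP k\<in>opp l. v k + u k) \<noteq> \<infinity>"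
      proof -
        obtain k where "(SUP k\<in>opp l. v k + u k) = v k + u k" using finite_SUP_attained[OF opp_fin opp_ne] by blast
        then show ?thesis using sfin by simp
      qed
      then show ?thesis using B by (simp add: eexp_add)
    qed
    also have "\<dots> = exp (-B) * Max ((\<lambda>k. eexp (v k + u k)) ` opp l)"
      using eexp_SUP[OF opp_fin[of l] opp_ne[of l], where g="\<lambda>k. v k + u k"] sfin by simp
    also have "\<dots> = Max ((\<lambda>x. exp (-B) * x) ` ((\<lambda>k. eexp (v k + u k)) ` opp l))"
      by (rule mono_Max_commute) (auto intro: monoI simp: opp_ne)
    also have "\<dots> = Max ((\<lambda>k. wt v l k * eexp (u k)) ` opp l)"
    proof -
      have "exp (-B) * eexp (v k + u k) = wt v l k * eexp (u k)" for k
        using B notinf[OF vV'(1), of k] ufin[of k] by (simp add: wt_def eexp_add)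
      then show ?thesis by (simp add: image_image)
    qed
    finally show ?thesis .
  qed
  have gfin: "- v l + (SUP k\<in>opp l. v k + u k) \<noteq> \<infinity>" if vV: "v \<in> Vl l" for v
  proof -
    have vV': "v \<in> V" "v l \<noteq> -\<infinity>" using vV by (auto simp: Vl_def)
    obtain B where B: "v l = ereal B" using vV' notinf[OF vV'(1), of l] by (cases "v l") auto
    obtain k where "(SUP k\<in>opp l. v k + u k) = v k + u k" using finite_SUP_attained[OF opp_fin opp_ne] by blast
    then show ?thesis using B notinf[OF vV'(1), of k] ufin[of k] by (cases "v k"; cases "u k") auto
  qed
  have "eexp (T u l) = Min ((\<lambda>v. eexp (- v l + (SUP k\<in>opp l. v k + u k))) ` Vl l)"
    unfolding T_eq using gfin by (intro eexp_INF Vl_fin Vl_ne)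
  also have "\<dots> = Min ((\<lambda>v. Max ((\<lambda>k. wt v l k * eexp (u k)) ` opp l)) ` Vl l)"
    using inner by (simp cong: image_cong)
  also have "\<dots> = F (\<chi> k. eexp (u k)) l" by (simp add: F_def)
  finally show ?thesis .
qed

end

context tsetup begin

definition K :: "(real^'n) set" where
  "K = {y. (\<forall>i. 0 \<le> y $ i \<and> y $ i \<le> 1) \<and> (MAX i. y $ i) = 1}"

definition box01 :: "(real^'n) set" where "box01 = cbox (\<chi> i. 0) (\<chi> i. 1)"

lemma box01_iff: "y \<in> box01 \<longleftrightarrow> (\<forall>i. 0 \<le> y $ i \<and> y $ i \<le> 1)"
  by (simp add: box01_def mem_box_cart)

lemma cont_MAX: "continuous_on S (\<lambda>y::real^'n. MAX i. y $ i)"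
  using cont_Max[where A=UNIV and f="\<lambda>i y. y $ i" and S=S] cont_nth by auto

lemma K_compact: "compact K"
proof -
  have "K = box01 \<inter> {y. (MAX i. y $ i) = 1}" by (auto simp: K_def box01_iff)
  moreover have "closed {y::real^'n. (MAX i. y $ i) = 1}"
    by (rule closed_Collect_eq) (auto intro: cont_MAX)
  moreover have "compact (box01 \<inter> {y::real^'n. (MAX i. y $ i) = 1})"
    unfolding box01_def by (rule compact_Int_closed[OF compact_cbox]) fact
  ultimately show ?thesis by simp
qed

lemma E1: assumes "Sub lam" shows "\<exists>y\<in>K. \<forall>l. exp lam * y $ l \<le> F y l"
proof -
  obtain a where a: "a \<in> tvecs" "\<exists>l. a l \<noteq> -\<infinity>" "\<And>l. ereal lam + a l \<le> T a l"
    using assms unfolding Sub_def by blast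
  have afin: "a k \<noteq> \<infinity>" for k using a(1) by (auto simp: tvecs_def)
  obtain k0 where k0: "(SUP k\<in>UNIV. a k) = a k0" using finite_SUP_attained[of "UNIV::'n set" a] by auto
  have ak0: "a k \<le> a k0" for k using k0 SUP_upper[of k UNIV a] by simp
  have "a k0 \<noteq> -\<infinity>" using a(2) ak0 by (metis MInfty_eq_minfinity ereal_infty_less_eq2(2))
  then obtain m where m: "a k0 = ereal m" using afin[of k0] by (cases "a k0") auto
  define a' where "a' k = ereal (-m) + a k" for k
  have a't: "a' \<in> tvecs" using afin by (auto simp: tvecs_def a'_def)
  have a'sub: "ereal lam + a' l \<le> T a' l" for l
  proof -
    have "ereal (-m) + (ereal lam + a l) \<le> ereal (-m) + T a l" by (rule add_left_mono) (rule a(3))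
    moreover have "T a' l = ereal (-m) + T a l" unfolding a'_def[abs_def] by (rule T_homog)
    ultimately show ?thesis by (simp add: a'_def ac_simps)
  qed
  define y where "y = (\<chi> k. eexp (a' k))"
  have a'le: "a' k \<le> 0" for k
  proof -
    have "a k \<le> ereal m" using ak0[of k] m by simp
    then show ?thesis unfolding a'_def using afin[of k] by (cases "a k") auto
  qed
  have y01: "0 \<le> y $ i \<and> y $ i \<le> 1" for i
    using eexp_nonneg eexp_mono[OF a'le[of i]] by (simp add: y_def zero_ereal_def)
  have "(MAX i. y $ i) = 1"
  proof (rule Max_eqI)
    show "1 \<in> range (\<lambda>i. y $ i)" using m by (auto simp: y_def a'_def intro!: image_eqI[of _ _ k0])
  qed (use y01 in auto)
  then have yK: "y \<in> K" using y01 by (simp add: K_def)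
  have "exp lam * y $ l \<le> F y l" for l
  proof -
    have "exp lam * y $ l = eexp (ereal lam + a' l)"
      using eexp_add[of "ereal lam" "a' l"] a't by (simp add: y_def tvecs_def)
    also have "\<dots> \<le> eexp (T a' l)" using a'sub[of l] T_lt_inf[OF a't, of l] by (intro eexp_mono) auto
    also have "\<dots> = F y l" unfolding y_def by (rule F_T[OF a't])
    finally show ?thesis .
  qed
  then show ?thesis using yK by blast
qed

lemma E2: assumes yK: "y \<in> K" and H: "\<And>l. exp lam * y $ l \<le> F y l" shows "Sub lam"
proof -
  define u where "u k = elog (y $ k)" for k
  have y0: "0 \<le> y $ k" for k using yK by (simp add: K_def)
  have ut: "u \<in> tvecs" by (auto simp: tvecs_def u_def elog_def)
  have yu: "(\<chi> k. eexp (u k)) = y" by (simp add: vec_eq_iff u_def eexp_elog y0)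
  have "(MAX i. y $ i) \<in> range (\<lambda>i. y $ i)" by (rule Max_in) auto
  then obtain k0 where "(MAX i. y $ i) = y $ k0" by blast
  then have "y $ k0 = 1" using yK by (simp add: K_def)
  then have nz: "u k0 \<noteq> -\<infinity>" by (simp add: u_def elog_def)
  have "ereal lam + u l \<le> T u l" for l
  proof -
    have "eexp (ereal lam + u l) = exp lam * y $ l"
      using eexp_add[of "ereal lam" "u l"] ut y0[of l] by (simp add: tvecs_def u_def eexp_elog)
    also have "\<dots> \<le> F y l" by (rule H)
    also have "\<dots> = eexp (T u l)" using F_T[OF ut, of l] yu by simp
    finally show ?thesis using eexp_le_iff[of "ereal lam + u l" "T u l"] T_lt_inf[OF ut, of l] ut
      by (auto simp: tvecs_def)
  qed
  then show ?thesis unfolding Sub_def using ut nz by blast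
qed

lemma E3: assumes pos: "\<And>k. 0 < y $ k" and s: "0 < s" and H: "\<And>l. F y l \<le> s * y $ l"
  shows "Sp (ln s)"
proof -
  define z where "z k = ln (y $ k)" for k
  define Z where "Z = (\<lambda>k. ereal (z k))"
  have Zt: "Z \<in> tvecs" by (simp add: tvecs_def Z_def)
  have yZ: "(\<chi> k. eexp (Z k)) = y" using pos by (simp add: vec_eq_iff Z_def z_def)
  have "T Z l \<le> ereal (ln s) + ereal (z l)" for l
  proof -
    have "eexp (T Z l) = F y l" using F_T[OF Zt, of l] yZ by simp
    also have "\<dots> \<le> s * y $ l" by (rule H)
    also have "\<dots> = eexp (ereal (ln s + z l))" using s pos[of l] by (simp add: z_def exp_add)
    finally have "eexp (T Z l) \<le> eexp (ereal (ln s + z l))" .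
    then have "T Z l \<le> ereal (ln s + z l)"
      using eexp_le_iff[of "T Z l" "ereal (ln s + z l)"] T_lt_inf[OF Zt, of l] by simp
    then show ?thesis by simp
  qed
  then show ?thesis unfolding Sp_def Z_def by blast
qed


lemma dich: "Sp lam \<or> (\<forall>e>0. \<exists>y\<in>K. \<forall>l. exp lam * y $ l - e \<le> F y l)"
proof (cases "Sp lam")
  case True then show ?thesis by blast
next
  case False
  then have nSp: "\<not> Sp lam" .
  have "\<forall>e>0. \<exists>y\<in>K. \<forall>l. exp lam * y $ l - e \<le> F y l"
  proof (intro allI impI)
    fix e :: real assume e: "0 < e"
    define m where "m y = (MAX k. F y k + e)" for y
    define G where "G y = (\<chi> l. (F y l + e) / m y)" for y
    have Fnn: "y \<in> box01 \<Longrightarrow> 0 \<le> F y l" for y l by (rule F_nonneg) (simp add: box01_iff)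
    have mge: "F y l + e \<le> m y" for y l unfolding m_def by (rule Max_ge) auto
    have mpos: "y \<in> box01 \<Longrightarrow> 0 < m y" for y using mge[of y] Fnn[of y] e by (meson add_nonneg_pos less_le_trans)
    have mcont: "continuous_on box01 m" unfolding m_def
      by (rule cont_Max) (auto intro: continuous_on_add F_cont)
    have Gcont: "continuous_on box01 G" unfolding G_def
      by (intro continuous_on_vec_lambda continuous_on_divide continuous_on_add F_cont mcont continuous_on_const)
         (use mpos in force)
    have Gmap: "G \<in> box01 \<rightarrow> box01"
    proof
      fix y assume y: "y \<in> box01"
      show "G y \<in> box01" unfolding box01_iff G_def
        using Fnn[OF y] e mpos[OF y] mge[of y] by (auto simp: divide_le_eq_1 less_imp_le add_nonneg_pos)
    qed
    have ne: "box01 \<noteq> {}"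
      using box01_iff[of "\<chi> i. 0"] by auto
    obtain y where y: "y \<in> box01" "G y = y"
      using brouwer[OF compact_cbox convex_box(1) ne[unfolded box01_def] Gcont[unfolded box01_def] Gmap[unfolded box01_def]]
      unfolding box01_def by blast
    have mp: "0 < m y" using mpos[OF y(1)] .
    have fix_eq: "F y l + e = m y * y $ l" for l
    proof -
      have "y $ l = (F y l + e) / m y" using y(2) by (metis G_def vec_lambda_beta)
      then show ?thesis using mp by (simp add: field_simps)
    qed
    have ypos: "0 < y $ l" for l
    proof -
      have "0 < F y l + e" using Fnn[OF y(1), of l] e by linarith
      then show ?thesis using fix_eq[of l] mp by (simp add: zero_less_mult_iff)
    qed
    show "\<exists>y\<in>K. \<forall>l. exp lam * y $ l - e \<le> F y l"
    proof (cases "m y \<le> exp lam")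
      case True
      have "\<And>l. F y l \<le> m y * y $ l" using fix_eq e by (metis le_add_same_cancel1 less_imp_le)
      then have "Sp (ln (m y))" using E3[OF ypos mp] by blast
      moreover have "ln (m y) \<le> lam" using True mp by (metis ln_exp ln_le_cancel_iff exp_gt_zero)
      ultimately have "Sp lam" by (rule Sp_mono)
      with nSp show ?thesis by blast
    next
      case False
      have ineq: "exp lam * y $ l - e \<le> F y l" for l
      proof -
        have "exp lam * y $ l \<le> m y * y $ l" using False ypos[of l] by (simp add: less_imp_le)
        then show ?thesis using fix_eq[of l] by simp
      qed
      have "(MAX k. y $ k) = 1"
      proof -
        have "(MAX k. y $ k) = (MAX k. (F y k + e) / m y)" using fix_eq mp by simp
        also have "\<dots> = (MAX k. F y k + e) / m y"
        proof -
          have "mono (\<lambda>x. x / m y)" using mp by (intro monoI) (simp add: divide_right_mono)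
          then have "(MAX k. F y k + e) / m y = Max ((\<lambda>x. x / m y) ` range (\<lambda>k. F y k + e))"
            by (rule mono_Max_commute) auto
          then show ?thesis by (simp add: image_image)
        qed
        also have "\<dots> = 1" using mp by (simp add: m_def)
        finally show ?thesis .
      qed
      then have "y \<in> K" using y(1) by (simp add: K_def box01_iff)
      then show ?thesis using ineq by blast
    qed
  qed
  then show ?thesis by blast
qed

lemma lim_sub:
  assumes H: "\<forall>e>0. \<exists>y\<in>K. \<forall>l. exp lam * y $ l - e \<le> F y l"
  shows "\<exists>y\<in>K. \<forall>l. exp lam * y $ l \<le> F y l"
proof -
  define ep where "ep n = inverse (real (Suc n))" for n
  have ep0: "0 < ep n" for n by (simp add: ep_def)
  define f where "f n = (SOME y. y \<in> K \<and> (\<forall>l. exp lam * y $ l - ep n \<le> F y l))" for n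
  have f: "f n \<in> K \<and> (\<forall>l. exp lam * f n $ l - ep n \<le> F (f n) l)" for n
    unfolding f_def by (rule someI_ex) (use H ep0 in blast)
  obtain y0 r where y0: "y0 \<in> K" "strict_mono r" "(f \<circ> r) \<longlonglongrightarrow> y0"
    using K_compact unfolding compact_def using f by meson
  have "exp lam * y0 $ l \<le> F y0 l" for l
  proof -
    have c: "isCont (\<lambda>y. F y l) y0"
      using F_cont[of UNIV l] continuous_on_eq_continuous_at[of UNIV] by auto
    have t1: "(\<lambda>n. F ((f \<circ> r) n) l) \<longlonglongrightarrow> F y0 l" by (rule isCont_tendsto_compose[OF c y0(3)])
    have t2: "(\<lambda>n. (f \<circ> r) n $ l) \<longlonglongrightarrow> y0 $ l" by (rule tendsto_vec_nth[OF y0(3)])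
    have t3: "(\<lambda>n. ep (r n)) \<longlonglongrightarrow> 0"
      using LIMSEQ_subseq_LIMSEQ[OF LIMSEQ_inverse_real_of_nat y0(2)] by (simp add: ep_def o_def)
    have t: "(\<lambda>n. F ((f \<circ> r) n) l - exp lam * (f \<circ> r) n $ l + ep (r n)) \<longlonglongrightarrow> F y0 l - exp lam * y0 $ l + 0"
      by (intro tendsto_intros t1 t2 t3)
    have "0 \<le> F y0 l - exp lam * y0 $ l + 0"
    proof (rule LIMSEQ_le_const[OF t])
      show "\<exists>N. \<forall>n\<ge>N. 0 \<le> F ((f \<circ> r) n) l - exp lam * (f \<circ> r) n $ l + ep (r n)"
        using f by (auto simp: algebra_simps)
    qed
    then show ?thesis by simp
  qed
  then show ?thesis using y0(1) by blast
qed

end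

fun wlk :: "('a \<Rightarrow> 'a \<Rightarrow> ereal) \<Rightarrow> 'a list \<Rightarrow> ereal" where
  "wlk c [] = 0"
| "wlk c [x] = 0"
| "wlk c (x # y # ys) = c x y + wlk c (y # ys)"

lemma wlk_append: "wlk c (xs @ [x] @ ys) = wlk c (xs @ [x]) + wlk c (x # ys)"
proof (induction xs)
  case Nil then show ?case by simp
next
  case (Cons a xs)
  show ?case
  proof (cases xs)
    case Nil then show ?thesis by simp
  next
    case (Cons b xs')
    then show ?thesis using Cons.IH by (simp add: add.assoc)
  qed
qed

lemma wlk_notinf: "(\<forall>x y. c x y \<noteq> \<infinity>) \<Longrightarrow> wlk c xs \<noteq> \<infinity>"
  by (induction c xs rule: wlk.induct) auto

lemma wlk_pot:
  assumes "\<And>x y. c x y + ereal (z y) \<le> ereal (z x)" "xs \<noteq> []"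
  shows "wlk c xs + ereal (z (last xs)) \<le> ereal (z (hd xs))"
  using assms(2)
proof (induction xs rule: induct_list012)
  case (3 x y ys)
  have "wlk c (x # y # ys) + ereal (z (last (x # y # ys))) = c x y + (wlk c (y # ys) + ereal (z (last (y # ys))))"
    by (simp add: add.assoc)
  also have "\<dots> \<le> c x y + ereal (z y)" using 3 by (intro add_left_mono) simp
  also have "\<dots> \<le> ereal (z x)" by (rule assms(1))
  finally show ?case by simp
qed simp_all

lemma wlk_shift: "wlk (\<lambda>x y. c x y + ereal d) xs = wlk c xs + ereal (d * real (length xs - 1))"
proof (induction xs rule: induct_list012)
  case (3 x y ys)
  have "wlk (\<lambda>x y. c x y + ereal d) (x # y # ys) = c x y + ereal d + (wlk c (y # ys) + ereal (d * real (length (y # ys) - 1)))"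
    using 3 by simp
  also have "\<dots> = c x y + wlk c (y # ys) + (ereal d + ereal (d * real (length (y # ys) - 1)))"
    by (simp only: ac_simps)
  also have "ereal d + ereal (d * real (length (y # ys) - 1)) = ereal (d * real (length (x # y # ys) - 1))"
    by (simp add: algebra_simps)
  finally show ?case by simp
qed (simp_all add: zero_ereal_def)

lemma short_walk:
  fixes c :: "'a::finite \<Rightarrow> 'a \<Rightarrow> ereal"
  assumes cyc: "\<And>xs. xs \<noteq> [] \<Longrightarrow> hd xs = last xs \<Longrightarrow> wlk c xs \<le> 0"
  shows "xs \<noteq> [] \<Longrightarrow> \<exists>ys. ys \<noteq> [] \<and> hd ys = hd xs \<and> length ys \<le> CARD('a) \<and> wlk c xs \<le> wlk c ys"
proof (induction xs rule: length_induct)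
  case (1 xs)
  show ?case
  proof (cases "length xs \<le> CARD('a)")
    case True then show ?thesis using 1 by blast
  next
    case False
    have "\<not> distinct xs"
    proof
      assume "distinct xs"
      then have "length xs = card (set xs)" by (simp add: distinct_card)
      also have "\<dots> \<le> CARD('a)" by (rule card_mono) auto
      finally show False using False by simp
    qed
    then obtain as x bs cs where xs: "xs = as @ [x] @ bs @ [x] @ cs" using not_distinct_decomp by blast
    define xs' where "xs' = as @ [x] @ cs"
    have len: "length xs' < length xs" by (simp add: xs xs'_def)
    have ne: "xs' \<noteq> []" by (simp add: xs'_def)
    have hd: "hd xs' = hd xs" by (cases as) (simp_all add: xs xs'_def)
    have "wlk c xs = wlk c (as @ [x]) + wlk c ((x # bs) @ [x] @ cs)"
      unfolding xs using wlk_append[of c as x "bs @ [x] @ cs"] by simp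
    also have "\<dots> = wlk c (as @ [x]) + (wlk c ((x # bs) @ [x]) + wlk c (x # cs))"
      by (subst wlk_append) simp
    also have "\<dots> \<le> wlk c (as @ [x]) + (0 + wlk c (x # cs))"
      using cyc[of "(x # bs) @ [x]"] by (intro add_left_mono add_right_mono) simp
    also have "\<dots> = wlk c xs'" unfolding xs'_def using wlk_append[of c as x cs] by simp
    finally have le: "wlk c xs \<le> wlk c xs'" .
    obtain ys where "ys \<noteq> []" "hd ys = hd xs'" "length ys \<le> CARD('a)" "wlk c xs' \<le> wlk c ys"
      using 1(1) len ne by blast
    then have "ys \<noteq> [] \<and> hd ys = hd xs \<and> length ys \<le> CARD('a) \<and> wlk c xs \<le> wlk c ys"
      using le hd by (auto intro: order_trans)
    then show ?thesis by blast
  qed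
qed

lemma potential:
  fixes c :: "'a::finite \<Rightarrow> 'a \<Rightarrow> ereal"
  assumes noinf: "\<And>x y. c x y \<noteq> \<infinity>"
    and cyc: "\<And>xs. xs \<noteq> [] \<Longrightarrow> hd xs = last xs \<Longrightarrow> wlk c xs \<le> 0"
  shows "\<exists>z::'a \<Rightarrow> real. \<forall>x y. c x y + ereal (z y) \<le> ereal (z x)"
proof -
  define W where "W x = {ys. ys \<noteq> [] \<and> hd ys = x \<and> length ys \<le> CARD('a)}" for x :: 'a
  have Wfin: "finite (W x)" for x
  proof -
    have "W x \<subseteq> {xs. set xs \<subseteq> UNIV \<and> length xs \<le> CARD('a)}" by (auto simp: W_def)
    moreover have "finite {xs. set xs \<subseteq> (UNIV::'a set) \<and> length xs \<le> CARD('a)}"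
      by (rule finite_lists_length_le) simp
    ultimately show ?thesis by (rule finite_subset)
  qed
  have Wne: "[x] \<in> W x" for x by (simp add: W_def)
  define Z where "Z x = Max (wlk c ` W x)" for x
  have Zge: "wlk c ys \<le> Z x" if "ys \<in> W x" for ys x
    unfolding Z_def using Wfin that by (intro Max_ge) auto
  have Zin: "Z x \<in> wlk c ` W x" for x unfolding Z_def using Wfin Wne by (intro Max_in) auto
  have Zfin: "Z x \<noteq> \<infinity>" "Z x \<noteq> -\<infinity>" for x
  proof -
    have "\<forall>xs. wlk c xs \<noteq> \<infinity>" using wlk_notinf[of c] noinf by blast
    then show "Z x \<noteq> \<infinity>" using Zin[of x] by (metis imageE)
    have "0 \<le> Z x" using Zge[OF Wne[of x]] by simp
    then show "Z x \<noteq> -\<infinity>" by auto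
  qed
  define z where "z x = real_of_ereal (Z x)" for x
  have Zz: "Z x = ereal (z x)" for x using Zfin[of x] by (cases "Z x") (auto simp: z_def)
  have "c x y + ereal (z y) \<le> ereal (z x)" for x y
  proof -
    obtain ys where ys: "ys \<in> W y" "Z y = wlk c ys" using Zin[of y] by auto
    then obtain ys' where ys': "ys = y # ys'" by (cases ys) (auto simp: W_def)
    have "c x y + ereal (z y) = wlk c (x # ys)" using ys ys' Zz[of y] by simp
    also obtain vs where "vs \<noteq> []" "hd vs = x" "length vs \<le> CARD('a)" "wlk c (x # ys) \<le> wlk c vs"
      using short_walk[OF cyc, of "x # ys"] by auto
    then have "wlk c (x # ys) \<le> Z x" using Zge[of vs x] by (auto simp: W_def)
    finally show ?thesis using Zz[of x] by simp
  qed
  then show ?thesis by blast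
qed


context tsetup begin

definition SpS :: "('n \<Rightarrow> 'n \<Rightarrow> ereal) \<Rightarrow> real \<Rightarrow> bool" where
  "SpS \<sigma> lam \<longleftrightarrow> (\<exists>z::'n \<Rightarrow> real. \<forall>l. \<forall>k\<in>opp l. \<sigma> l k + ereal (z k) \<le> ereal lam + \<sigma> l l + ereal (z l))"

definition Sig :: "('n \<Rightarrow> 'n \<Rightarrow> ereal) set" where "Sig = {\<sigma>. \<forall>l. \<sigma> l \<in> Vl l}"

lemma Sig_fin: "finite Sig"
proof -
  have "Sig = PiE UNIV Vl" by (auto simp: Sig_def PiE_def extensional_def)
  then show ?thesis using finite_PiE[of UNIV Vl] Vl_fin by simp
qed

lemma Sig_ne: "Sig \<noteq> {}"
proof -
  have "(\<lambda>l. SOME v. v \<in> Vl l) \<in> Sig" unfolding Sig_def using Vl_ne by (simp add: some_in_eq)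
  then show ?thesis by blast
qed

lemma Sig_fin_entries: assumes "\<sigma> \<in> Sig" obtains B where "\<sigma> l l = ereal B"
proof -
  have "\<sigma> l \<in> V" "\<sigma> l l \<noteq> -\<infinity>" using assms by (auto simp: Sig_def Vl_def)
  then show ?thesis using that notinf by (cases "\<sigma> l l") auto
qed

lemma Sp_SpS: assumes "Sp lam" shows "\<exists>\<sigma>\<in>Sig. SpS \<sigma> lam"
proof -
  obtain z where z: "\<And>l. T (\<lambda>k. ereal (z k)) l \<le> ereal lam + ereal (z l)"
    using assms unfolding Sp_def by blast
  define Z where "Z = (\<lambda>k. ereal (z k))"
  have ex: "\<exists>v. v \<in> Vl l \<and> T Z l = - v l + (SUP k\<in>opp l. v k + Z k)" for l
    using finite_INF_attained[OF Vl_fin[of l] Vl_ne[of l], where f="\<lambda>v. - v l + (SUP k\<in>opp l. v k + Z k)"]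
    unfolding T_eq by blast
  define \<sigma> where "\<sigma> l = (SOME v. v \<in> Vl l \<and> T Z l = - v l + (SUP k\<in>opp l. v k + Z k))" for l
  have \<sigma>: "\<sigma> l \<in> Vl l" "T Z l = - \<sigma> l l + (SUP k\<in>opp l. \<sigma> l k + Z k)" for l
    using someI_ex[OF ex[of l]] unfolding \<sigma>_def by blast+
  have sig: "\<sigma> \<in> Sig" using \<sigma>(1) by (simp add: Sig_def)
  have "\<sigma> l k + ereal (z k) \<le> ereal lam + \<sigma> l l + ereal (z l)" if "k \<in> opp l" for l k
  proof -
    obtain B where B: "\<sigma> l l = ereal B" using Sig_fin_entries[OF sig] by blast
    have "- \<sigma> l l + (SUP k\<in>opp l. \<sigma> l k + Z k) \<le> ereal lam + ereal (z l)" using \<sigma>(2)[of l] z[of l] by (simp add: Z_def)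
    then have "(SUP k\<in>opp l. \<sigma> l k + Z k) \<le> ereal (lam + B + z l)" using B
      by (cases "(SUP k\<in>opp l. \<sigma> l k + Z k)") auto
    moreover have "\<sigma> l k + Z k \<le> (SUP k\<in>opp l. \<sigma> l k + Z k)" using that by (rule SUP_upper)
    ultimately show ?thesis using B by (simp add: Z_def)
  qed
  then show ?thesis using sig unfolding SpS_def by blast
qed

lemma SpS_Sp: assumes "\<sigma> \<in> Sig" "SpS \<sigma> lam" shows "Sp lam"
proof -
  obtain z where z: "\<And>l k. k \<in> opp l \<Longrightarrow> \<sigma> l k + ereal (z k) \<le> ereal lam + \<sigma> l l + ereal (z l)"
    using assms(2) unfolding SpS_def by blast
  have "T (\<lambda>k. ereal (z k)) l \<le> ereal lam + ereal (z l)" for l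
  proof -
    obtain B where B: "\<sigma> l l = ereal B" using Sig_fin_entries[OF assms(1)] by blast
    have vl: "\<sigma> l \<in> Vl l" using assms(1) by (simp add: Sig_def)
    have "T (\<lambda>k. ereal (z k)) l \<le> - \<sigma> l l + (SUP k\<in>opp l. \<sigma> l k + ereal (z k))"
      unfolding T_eq using vl by (rule INF_lower)
    also have "\<dots> \<le> - \<sigma> l l + ereal (lam + B + z l)"
    proof (intro add_left_mono SUP_least)
      fix k assume "k \<in> opp l"
      then have "\<sigma> l k + ereal (z k) \<le> ereal lam + \<sigma> l l + ereal (z l)" by (rule z)
      then show "\<sigma> l k + ereal (z k) \<le> ereal (lam + B + z l)" using B by simp
    qed
    also have "\<dots> = ereal lam + ereal (z l)" using B by simp
    finally show ?thesis .
  qed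
  then show ?thesis unfolding Sp_def by blast
qed

lemma SpS_mono: assumes "SpS \<sigma> lam" "lam \<le> lam'" shows "SpS \<sigma> lam'"
proof -
  obtain z where z: "\<And>l k. k \<in> opp l \<Longrightarrow> \<sigma> l k + ereal (z k) \<le> ereal lam + \<sigma> l l + ereal (z l)"
    using assms(1) unfolding SpS_def by blast
  have "ereal lam + \<sigma> l l + ereal (z l) \<le> ereal lam' + \<sigma> l l + ereal (z l)" for l
    using assms(2) by (intro add_right_mono) simp
  then show ?thesis unfolding SpS_def using z order_trans by blast
qed

lemma Sp_closed: assumes H: "\<And>lam'. lam < lam' \<Longrightarrow> Sp lam'" shows "Sp lam"
proof -
  have "\<exists>\<sigma>\<in>Sig. \<forall>lam'>lam. SpS \<sigma> lam'"
  proof (rule ccontr)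
    assume "\<not> ?thesis"
    then have ex: "\<forall>\<sigma>\<in>Sig. \<exists>lam'>lam. \<not> SpS \<sigma> lam'" by blast
    define f where "f \<sigma> = (SOME lam'. lam' > lam \<and> \<not> SpS \<sigma> lam')" for \<sigma>
    have f: "f \<sigma> > lam" "\<not> SpS \<sigma> (f \<sigma>)" if "\<sigma> \<in> Sig" for \<sigma>
      using someI_ex[OF ex[rule_format, OF that]] unfolding f_def by blast+
    define lam1 where "lam1 = Min (f ` Sig)"
    have "lam1 \<in> f ` Sig" unfolding lam1_def using Sig_fin Sig_ne by (intro Min_in) auto
    then have "lam < lam1" using f(1) by auto
    then obtain \<sigma> where \<sigma>: "\<sigma> \<in> Sig" "SpS \<sigma> lam1" using Sp_SpS[OF H] by blast
    have "lam1 \<le> f \<sigma>" unfolding lam1_def using Sig_fin \<sigma>(1) by (intro Min_le) auto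
    then have "SpS \<sigma> (f \<sigma>)" using SpS_mono[OF \<sigma>(2)] by blast
    with f(2)[OF \<sigma>(1)] show False by blast
  qed
  then obtain \<sigma> where \<sigma>: "\<sigma> \<in> Sig" "\<And>lam'. lam' > lam \<Longrightarrow> SpS \<sigma> lam'" by blast
  define c where "c x y = (if y \<in> opp x then \<sigma> x y + ereal (- real_of_ereal (\<sigma> x x) - lam) else -\<infinity>)" for x y
  have sV: "\<sigma> x \<in> V" for x using \<sigma>(1) by (simp add: Sig_def Vl_def)
  have noinf: "c x y \<noteq> \<infinity>" for x y using notinf[OF sV[of x], of y] by (cases "\<sigma> x y") (auto simp: c_def)
  have cyc: "wlk c xs \<le> 0" if xs: "xs \<noteq> []" "hd xs = last xs" for xs
  proof -
    have step: "wlk c xs \<le> ereal (d * real (length xs - 1))" if d: "0 < d" for d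
    proof -
      obtain z where z: "\<And>l k. k \<in> opp l \<Longrightarrow> \<sigma> l k + ereal (z k) \<le> ereal (lam + d) + \<sigma> l l + ereal (z l)"
        using \<sigma>(2)[of "lam + d"] d unfolding SpS_def by auto
      have pot: "c x y + ereal (-d) + ereal (z y) \<le> ereal (z x)" for x y
      proof (cases "y \<in> opp x")
        case True
        obtain B where B: "\<sigma> x x = ereal B" using Sig_fin_entries[OF \<sigma>(1)] by blast
        have zz: "\<sigma> x y + ereal (z y) \<le> ereal (lam + d) + \<sigma> x x + ereal (z x)" using z[OF True] .
        show ?thesis
        proof (cases "\<sigma> x y")
          case (real w)
          then show ?thesis using zz B True by (simp add: c_def)
        next
          case PInf then show ?thesis using notinf[OF sV[of x], of y] by simp
        qed (simp add: c_def)
      qed (simp add: c_def)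
      have "wlk (\<lambda>x y. c x y + ereal (-d)) xs + ereal (z (last xs)) \<le> ereal (z (hd xs))"
        by (rule wlk_pot[OF _ xs(1)]) (rule pot)
      then have "wlk c xs + ereal (-d * real (length xs - 1)) + ereal (z (hd xs)) \<le> ereal (z (hd xs))"
        using xs(2) by (simp add: wlk_shift)
      then show ?thesis using wlk_notinf[of c xs] noinf by (cases "wlk c xs") auto
    qed
    show ?thesis
    proof (cases "wlk c xs")
      case (real w)
      have "w \<le> 0"
      proof (rule ccontr)
        assume "\<not> w \<le> 0"
        then have w: "0 < w" by simp
        define L where "L = real (length xs - 1)"
        have L0: "0 \<le> L" by (simp add: L_def)
        define d where "d = w / (2 * (L + 1))"
        have d0: "0 < d" using w L0 by (simp add: d_def)
        have "w \<le> d * L" using step[OF d0] real by (simp add: L_def)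
        moreover have "d * L < w"
        proof -
          have pos: "0 < 2 * (L + 1)" using L0 by simp
          have "w * L < w * (2 * (L + 1))" using w L0 by (intro mult_strict_left_mono) auto
          then have "w * L / (2 * (L + 1)) < w" using pos by (simp add: divide_less_eq)
          then show ?thesis by (simp add: d_def)
        qed
        ultimately show False by simp
      qed
      then show ?thesis using real by simp
    next
      case PInf then show ?thesis using wlk_notinf[of c xs] noinf by blast
    qed simp
  qed
  obtain z where z: "\<And>x y. c x y + ereal (z y) \<le> ereal (z x)"
    using potential[of c] noinf cyc by blast
  have "SpS \<sigma> lam" unfolding SpS_def
  proof (intro exI allI ballI)
    fix l k assume k: "k \<in> opp l"
    obtain B where B: "\<sigma> l l = ereal B" using Sig_fin_entries[OF \<sigma>(1)] by blast
    have h: "c l k + ereal (z k) \<le> ereal (z l)" by (rule z)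
    show "\<sigma> l k + ereal (z k) \<le> ereal lam + \<sigma> l l + ereal (z l)"
    proof (cases "\<sigma> l k")
      case (real w)
      then show ?thesis using h B k by (simp add: c_def)
    next
      case PInf then show ?thesis using notinf[OF sV[of l], of k] by simp
    qed simp
  qed
  then show ?thesis by (rule SpS_Sp[OF \<sigma>(1)])
qed

end

context tsetup begin

definition Lam :: "real set" where "Lam = {lam. Sub lam}"
definition lstar :: ereal where "lstar = Sup (ereal ` Lam)"

lemma Sp0: "Sp 0"
proof -
  have ex: "\<exists>v\<in>V. (SUP w\<in>V. w l) = v l" for l using finite_SUP_attained[OF finV V_ne] by blast
  define v0 where "v0 l = (SOME v. v \<in> V \<and> (SUP w\<in>V. w l) = v l)" for l
  have v0: "v0 l \<in> V" "(SUP w\<in>V. w l) = v0 l l" for l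
    using someI_ex[OF ex[of l, unfolded Bex_def]] unfolding v0_def by blast+
  have v0fin: "v0 l l \<noteq> -\<infinity>" for l
  proof -
    obtain v where "v \<in> V" "v l \<noteq> -\<infinity>" using cover by blast
    then have "v l \<le> v0 l l" using v0(2)[of l] SUP_upper[of v V "\<lambda>w. w l"] by simp
    then show ?thesis using \<open>v l \<noteq> -\<infinity>\<close> by auto
  qed
  obtain x where x: "\<And>l. v0 l l = ereal (x l)"
  proof -
    have "\<forall>l. \<exists>r. v0 l l = ereal r" using v0fin notinf[OF v0(1)] by (metis ereal_cases)
    then show ?thesis using that by metis
  qed
  have le: "v k \<le> ereal (x k)" if "v \<in> V" for v k
    using SUP_upper[OF that, of "\<lambda>w. w k"] v0(2)[of k] x[of k] by simp
  have "T (\<lambda>k. ereal (- x k)) l \<le> ereal 0 + ereal (- x l)" for l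
  proof -
    have vl: "v0 l \<in> Vl l" using v0(1) v0fin by (simp add: Vl_def)
    have "T (\<lambda>k. ereal (- x k)) l \<le> - v0 l l + (SUP k\<in>opp l. v0 l k + ereal (- x k))"
      unfolding T_eq using vl by (rule INF_lower)
    also have "\<dots> \<le> - v0 l l + 0"
    proof (intro add_left_mono SUP_least)
      fix k
      have "v0 l k \<le> ereal (x k)" by (rule le[OF v0(1)])
      then show "v0 l k + ereal (- x k) \<le> 0" by (cases "v0 l k") auto
    qed
    finally show ?thesis using x[of l] by simp
  qed
  then have "\<forall>l. T (\<lambda>k. ereal (- x k)) l \<le> ereal 0 + ereal (- x l)" by blast
  then show ?thesis unfolding Sp_def by (rule exI[of _ "\<lambda>k. - x k"])
qed

lemma Lam_le0: "lam \<in> Lam \<Longrightarrow> lam \<le> 0"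
  using sub_le_super[OF _ Sp0] by (simp add: Lam_def)

lemma lstar_le0: "lstar \<le> 0"
  unfolding lstar_def by (rule Sup_least) (auto dest: Lam_le0)

lemma lstar_upper: "lam \<in> Lam \<Longrightarrow> ereal lam \<le> lstar"
  unfolding lstar_def by (rule Sup_upper) simp

lemma gt_Sp: assumes "lstar < ereal lam" shows "Sp lam"
proof -
  have "\<not> Sub lam"
  proof
    assume "Sub lam"
    then have "ereal lam \<le> lstar" by (intro lstar_upper) (simp add: Lam_def)
    with assms show False by simp
  qed
  moreover have "Sp lam \<or> Sub lam" using dich[of lam] lim_sub E2 by blast
  ultimately show ?thesis by blast
qed

lemma lstar_fin:
  assumes "lstar = ereal L" shows "Sub L" "Sp L"
proof -
  show "Sp L" by (rule Sp_closed) (use gt_Sp assms in auto)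
  have "\<forall>e>0. \<exists>y\<in>K. \<forall>l. exp L * y $ l - e \<le> F y l"
  proof (intro allI impI)
    fix e :: real assume e: "0 < e"
    define d where "d = e / exp L"
    have d: "0 < d" using e by (simp add: d_def)
    have "ereal (L - d) < lstar" using assms d by simp
    then obtain lam' where lam': "lam' \<in> Lam" "ereal (L - d) < ereal lam'"
      unfolding lstar_def less_Sup_iff by blast
    have lamL: "lam' \<le> L" using lstar_upper[OF lam'(1)] assms by simp
    obtain y where y: "y \<in> K" "\<And>l. exp lam' * y $ l \<le> F y l"
      using E1 lam'(1) by (auto simp: Lam_def)
    have "exp L * y $ l - e \<le> F y l" for l
    proof -
      have y01: "0 \<le> y $ l" "y $ l \<le> 1" using y(1) by (auto simp: K_def)
      have "exp L - exp lam' \<le> exp L - exp (L - d)" using lam'(2) by simp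
      also have "\<dots> = exp L * (1 - exp (-d))" by (simp add: exp_diff field_simps exp_minus)
      also have "\<dots> \<le> exp L * d" using exp_ge_add_one_self[of "-d"] by (intro mult_left_mono) auto
      also have "\<dots> = e" by (simp add: d_def)
      finally have diff: "exp L - exp lam' \<le> e" .
      have nn: "0 \<le> exp L - exp lam'" using lamL by simp
      have "(exp L - exp lam') * y $ l \<le> exp L - exp lam'"
        using y01 nn by (simp add: mult_left_le)
      then have "exp L * y $ l - e \<le> exp lam' * y $ l" using diff by (simp add: algebra_simps)
      then show ?thesis using y(2)[of l] by simp
    qed
    then show "\<exists>y\<in>K. \<forall>l. exp L * y $ l - e \<le> F y l" using y(1) by blast
  qed
  then show "Sub L" using lim_sub E2 by blast
qed

lemma eig_fin:
  assumes "lstar = ereal L"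
  shows "\<exists>u\<in>tvecs. (\<exists>l. u l \<noteq> -\<infinity>) \<and> (\<forall>l. T u l = ereal L + u l)"
proof -
  obtain a where a: "a \<in> tvecs" "\<exists>l. a l \<noteq> -\<infinity>" "\<And>l. ereal L + a l \<le> T a l"
    using lstar_fin(1)[OF assms] unfolding Sub_def by blast
  obtain z where z: "\<And>l. T (\<lambda>k. ereal (z k)) l \<le> ereal L + ereal (z l)"
    using lstar_fin(2)[OF assms] unfolding Sp_def by blast
  show ?thesis by (rule eigen_exists[OF a z])
qed

lemma spec_rad_eq: "spec_rad T = lstar"
proof -
  define E where "E = {lam. lam \<noteq> \<infinity> \<and> (\<exists>u\<in>tvecs. (\<exists>l. u l \<noteq> -\<infinity>) \<and> T u = (\<lambda>l. lam + u l))}"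
  have up: "lam \<le> lstar" if lamE: "lam \<in> E" for lam
  proof (cases lam)
    case (real r)
    obtain u where u: "u \<in> tvecs" "\<exists>l. u l \<noteq> -\<infinity>" "T u = (\<lambda>l. lam + u l)" using lamE by (auto simp: E_def)
    have "Sub r" unfolding Sub_def using u real by auto
    then show ?thesis using real lstar_upper by (simp add: Lam_def)
  next
    case PInf then show ?thesis using lamE by (simp add: E_def)
  qed simp
  have "Sup E = lstar"
  proof (rule antisym)
    show "Sup E \<le> lstar" by (rule Sup_least) (rule up)
    show "lstar \<le> Sup E"
    proof (cases lstar)
      case (real L)
      obtain u where u: "u \<in> tvecs" "\<exists>l. u l \<noteq> -\<infinity>" "\<forall>l. T u l = ereal L + u l"
        using eig_fin[OF real] by blast
      have "T u = (\<lambda>l. ereal L + u l)" using u(3) by (intro ext) simp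
      then have "ereal L \<in> E" using u by (auto simp: E_def)
      then show ?thesis using real by (simp add: Sup_upper)
    next
      case PInf then show ?thesis using lstar_le0 by simp
    qed simp
  qed
  then show ?thesis by (simp add: spec_rad_def E_def)
qed

lemma dist_lower:
  assumes at: "a \<in> tvecs" and nz: "\<exists>l. a l \<noteq> -\<infinity>"
  shows "- lstar \<le> dist_H V (trop_hyp I J a)"
proof (rule ccontr)
  assume "\<not> ?thesis"
  then have "dist_H V (trop_hyp I J a) < - lstar" by simp
  then obtain s where s: "dist_H V (trop_hyp I J a) < ereal s" "ereal s < - lstar"
    using ereal_dense2 by blast
  have "\<And>l. ereal (-s) + a l \<le> T a l" by (rule dist_ge[OF at s(1)])
  then have "Sub (-s)" unfolding Sub_def using at nz by blast
  then have "ereal (-s) \<le> lstar" by (intro lstar_upper) (simp add: Lam_def)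
  then have "- lstar \<le> ereal s" by (simp add: ereal_uminus_le_reorder)
  with s(2) show False by simp
qed

lemma dist_upper:
  assumes at: "a \<in> tvecs" and L: "lstar = ereal L" and sub: "\<And>l. ereal L + a l \<le> T a l"
  shows "dist_H V (trop_hyp I J a) \<le> - lstar"
proof -
  have "L \<le> 0" using lstar_le0 L by simp
  then show ?thesis using dist_le[OF at _ sub] L by simp
qed

lemma R_char: "- lstar = Sup {r::ereal. 0 \<le> r \<and> (\<exists>w. vert_int J w r \<subseteq> trop_span V)}"
  (is "_ = Sup ?R")
proof (rule antisym)
  show "- lstar \<le> Sup ?R"
  proof (cases lstar)
    case (real L)
    have "Sp (- (- L))" using lstar_fin(2)[OF real] by simp
    moreover have "0 \<le> - L" using lstar_le0 real by simp
    ultimately obtain c where "vert_int J c (ereal (-L)) \<subseteq> trop_span V" using Sp_to_VI by blast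
    then have "ereal (-L) \<in> ?R" using \<open>0 \<le> - L\<close> by auto
    then show ?thesis using real by (simp add: Sup_upper)
  next
    case MInf
    have "ereal t \<le> Sup ?R" for t
    proof -
      define t' where "t' = max t 0"
      have "lstar < ereal (- t')" using MInf by simp
      then have "Sp (- t')" by (rule gt_Sp)
      have t'0: "0 \<le> t'" by (simp add: t'_def)
      obtain c where "vert_int J c (ereal t') \<subseteq> trop_span V" using Sp_to_VI[OF \<open>Sp (- t')\<close> t'0] by blast
      then have "ereal t' \<in> ?R" using t'0 by auto
      then have "ereal t' \<le> Sup ?R" by (rule Sup_upper)
      then show ?thesis by (simp add: t'_def order_trans[rotated])
    qed
    then have "Sup ?R = \<infinity>" by (rule ereal_top)
    then show ?thesis by simp
  next
    case PInf then show ?thesis using lstar_le0 by simp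
  qed
  show "Sup ?R \<le> - lstar"
  proof (rule Sup_least)
    fix r assume "r \<in> ?R"
    then obtain w where r0: "0 \<le> r" and w: "vert_int J w r \<subseteq> trop_span V" by blast
    have bound: "lam \<le> - t" if "lam \<in> Lam" "0 \<le> t" "ereal t \<le> r" for lam t
    proof -
      have "vert_int J w (ereal t) \<subseteq> vert_int J w r"
      proof
        fix p assume "p \<in> vert_int J w (ereal t)"
        then obtain lam mu where p: "p = (\<lambda>l. ereal (lam + w l + mu * (if l \<in> J then 1 else 0)))"
          "- ereal t \<le> ereal mu" "ereal mu \<le> ereal t" unfolding vert_int_def by blast
        have "- r \<le> - ereal t" using that(3) by (simp only: ereal_minus_le_minus)
        then have "- r \<le> ereal mu" using p(2) by (rule order_trans)
        moreover have "ereal mu \<le> r" using p(3) that(3) by (rule order_trans)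
        ultimately show "p \<in> vert_int J w r" unfolding vert_int_def using p(1) by blast
      qed
      then have "Sp (-t)" using VI_to_Sp[of w t] w that(2) by blast
      then show ?thesis using sub_le_super that(1) by (simp add: Lam_def)
    qed
    show "r \<le> - lstar"
    proof (cases r)
      case (real t)
      have "lstar \<le> ereal (-t)" unfolding lstar_def
        by (rule Sup_least) (use bound r0 real in auto)
      then show ?thesis using real by (cases lstar) auto
    next
      case PInf
      have "Lam = {}"
      proof (rule ccontr)
        assume "Lam \<noteq> {}"
        then obtain lam where lam: "lam \<in> Lam" by blast
        have "lam \<le> - (\<bar>lam\<bar> + 1)" using bound[OF lam, of "\<bar>lam\<bar> + 1"] PInf by simp
        then show False by simp
      qed
      then have "lstar = -\<infinity>" by (simp add: lstar_def bot_ereal_def)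
      then show ?thesis by simp
    next
      case MInf then show ?thesis using r0 by simp
    qed
  qed
qed


lemma main:
  shows "(\<exists>a\<in>tvecs. (\<exists>l. a l \<noteq> -\<infinity>) \<and>
            dist_H V (trop_hyp I J a) = - spec_rad (T_IJ V I J) \<and>
            (\<forall>a'\<in>tvecs. (\<exists>l. a' l \<noteq> -\<infinity>) \<longrightarrow>
                dist_H V (trop_hyp I J a) \<le> dist_H V (trop_hyp I J a')))
      \<and> - spec_rad (T_IJ V I J) =
          Sup {r::ereal. 0 \<le> r \<and> (\<exists>w. vert_int J w r \<subseteq> trop_span V)}
      \<and> (\<forall>b\<in>tvecs. (\<exists>l. b l \<noteq> -\<infinity>) \<longrightarrow>
            (\<forall>l. spec_rad (T_IJ V I J) + b l \<le> T_IJ V I J b l) \<longrightarrow>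
            dist_H V (trop_hyp I J b) = - spec_rad (T_IJ V I J))
      \<and> (\<bar>spec_rad (T_IJ V I J)\<bar> \<noteq> \<infinity> \<longrightarrow>
            (\<exists>c. vert_int J c (- spec_rad (T_IJ V I J)) \<subseteq> trop_span V))"
proof -
  have sr: "spec_rad (T_IJ V I J) = lstar" by (rule spec_rad_eq)
  have P1: "\<exists>a\<in>tvecs. (\<exists>l. a l \<noteq> -\<infinity>) \<and> dist_H V (trop_hyp I J a) = - lstar \<and>
            (\<forall>a'\<in>tvecs. (\<exists>l. a' l \<noteq> -\<infinity>) \<longrightarrow> dist_H V (trop_hyp I J a) \<le> dist_H V (trop_hyp I J a'))"
  proof (cases lstar)
    case (real L)
    obtain u where u: "u \<in> tvecs" "\<exists>l. u l \<noteq> -\<infinity>" "\<And>l. T u l = ereal L + u l"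
      using eig_fin[OF real] by blast
    have "dist_H V (trop_hyp I J u) \<le> - lstar" by (rule dist_upper[OF u(1) real]) (simp add: u(3))
    moreover have "- lstar \<le> dist_H V (trop_hyp I J u)" by (rule dist_lower[OF u(1,2)])
    ultimately have eq: "dist_H V (trop_hyp I J u) = - lstar" by simp
    have "\<forall>a'\<in>tvecs. (\<exists>l. a' l \<noteq> -\<infinity>) \<longrightarrow> dist_H V (trop_hyp I J u) \<le> dist_H V (trop_hyp I J a')"
      using eq dist_lower by simp
    then show ?thesis using u eq by blast
  next
    case MInf
    define a :: "'n \<Rightarrow> ereal" where "a = (\<lambda>_. 0)"
    have at: "a \<in> tvecs" and nz: "\<exists>l. a l \<noteq> -\<infinity>" by (auto simp: a_def tvecs_def)
    have inf: "dist_H V (trop_hyp I J a') = \<infinity>" if "a' \<in> tvecs" "\<exists>l. a' l \<noteq> -\<infinity>" for a'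
      using dist_lower[OF that] MInf by simp
    show ?thesis using at nz inf[OF at nz] inf MInf by auto
  next
    case PInf then show ?thesis using lstar_le0 by simp
  qed
  have P3: "\<forall>b\<in>tvecs. (\<exists>l. b l \<noteq> -\<infinity>) \<longrightarrow> (\<forall>l. lstar + b l \<le> T b l) \<longrightarrow>
            dist_H V (trop_hyp I J b) = - lstar"
  proof (intro ballI impI)
    fix b assume bt: "b \<in> tvecs" and nz: "\<exists>l. b l \<noteq> -\<infinity>" and sub: "\<forall>l. lstar + b l \<le> T b l"
    have lo: "- lstar \<le> dist_H V (trop_hyp I J b)" by (rule dist_lower[OF bt nz])
    show "dist_H V (trop_hyp I J b) = - lstar"
    proof (cases lstar)
      case (real L)
      have "dist_H V (trop_hyp I J b) \<le> - lstar" by (rule dist_upper[OF bt real]) (use sub real in auto)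
      then show ?thesis using lo by simp
    next
      case MInf then show ?thesis using lo by simp
    next
      case PInf then show ?thesis using lstar_le0 by simp
    qed
  qed
  have P4: "\<bar>lstar\<bar> \<noteq> \<infinity> \<longrightarrow> (\<exists>c. vert_int J c (- lstar) \<subseteq> trop_span V)"
  proof
    assume "\<bar>lstar\<bar> \<noteq> \<infinity>"
    then obtain L where L: "lstar = ereal L" by (cases lstar) auto
    have "Sp (- (- L))" using lstar_fin(2)[OF L] by simp
    moreover have "0 \<le> - L" using lstar_le0 L by simp
    ultimately obtain c where "vert_int J c (ereal (-L)) \<subseteq> trop_span V" using Sp_to_VI by blast
    then show "\<exists>c. vert_int J c (- lstar) \<subseteq> trop_span V" using L by auto
  qed
  show ?thesis unfolding sr using P1 R_char P3 P4 by blast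
qed

end

theorem theorem5p8:
  fixes I J :: "'n::finite set" and V :: "('n \<Rightarrow> ereal) set"
  assumes "I \<noteq> {}" "J \<noteq> {}" "I \<union> J = UNIV" "I \<inter> J = {}"
    and "finite V" "V \<subseteq> tvecs"
    and "\<forall>v\<in>V. \<exists>l. v l \<noteq> -\<infinity>"
    and "\<forall>l. \<exists>v\<in>V. v l \<noteq> -\<infinity>"
  shows "(\<exists>a\<in>tvecs. (\<exists>l. a l \<noteq> -\<infinity>) \<and>
            dist_H V (trop_hyp I J a) = - spec_rad (T_IJ V I J) \<and>
            (\<forall>a'\<in>tvecs. (\<exists>l. a' l \<noteq> -\<infinity>) \<longrightarrow>
                dist_H V (trop_hyp I J a) \<le> dist_H V (trop_hyp I J a')))
      \<and> - spec_rad (T_IJ V I J) =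
          Sup {r::ereal. 0 \<le> r \<and> (\<exists>w. vert_int J w r \<subseteq> trop_span V)}
      \<and> (\<forall>b\<in>tvecs. (\<exists>l. b l \<noteq> -\<infinity>) \<longrightarrow>
            (\<forall>l. spec_rad (T_IJ V I J) + b l \<le> T_IJ V I J b l) \<longrightarrow>
            dist_H V (trop_hyp I J b) = - spec_rad (T_IJ V I J))
      \<and> (\<bar>spec_rad (T_IJ V I J)\<bar> \<noteq> \<infinity> \<longrightarrow>
            (\<exists>c. vert_int J c (- spec_rad (T_IJ V I J)) \<subseteq> trop_span V))"
proof -
  interpret tsetup I J V by (rule tsetup.intro) (use assms in auto)
  show ?thesis by (rule main)
qed


end
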